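(* Let $\varepsilon>0$ and $f_1,f_2$ be real-analytic on $[-\varepsilon,\infty)$ with $f_1(x)>0$, $f_2(x)>0$ for all $x\ge-\varepsilon$. Suppose that $A(f_1)$ is geometrically quasi-periodic (so it extends to a real-analytic function on $\mathbb R$, still denoted $A(f_1)$) and that there is $x_0>0$ with $A(f_2)(x)=A(f_1)(x_0-x)$ for all $x$ (where $A(f_2)$ is likewise understood as the analytic function on $\mathbb R$ given by this relation). Then $f_1$, $f_2$, $A(f_1)$ and $A(f_2)$ are constant.
   Context: For a real-analytic $f$ on $[-\varepsilon,\infty)$, $A(f)(\theta)=\int_0^{\pi/2}f(\theta\sin^2s)\,ds=\int_0^1\frac{f(\theta s^2)}{\sqrt{1-s^2}}ds$ for $\theta\ge-\varepsilon$; $A(f)$ is real-analytic. A map $g:(0,\infty)\to\mathbb R$ is geometrically $\tau$-quasi-periodic ($\tau>0$) if there is $\gamma\neq0$ with $g(x+\tau)=\gamma g(x)$ for all $x>0$; geometrically quasi-periodic means this holds for some $\tau>0$; an analytic such $g$ has an analytic extension to $\mathbb R$ satisfying the same relation. *)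

theory Defs
  imports "HOL-Analysis.Analysis"
begin

definition real_analytic_on :: "(real \<Rightarrow> real) \<Rightarrow> real set \<Rightarrow> bool" where
  "real_analytic_on f S \<longleftrightarrow>
     (\<forall>x\<in>S. \<exists>r>0. \<exists>a::nat \<Rightarrow> real.
        \<forall>y\<in>S. \<bar>y - x\<bar> < r \<longrightarrow> (\<lambda>n. a n * (y - x) ^ n) sums f y)"

definition A_op :: "(real \<Rightarrow> real) \<Rightarrow> real \<Rightarrow> real" where
  "A_op f \<theta> = integral {0..pi/2} (\<lambda>s. f (\<theta> * (sin s)\<^sup>2))"

definition geom_qp_with :: "real \<Rightarrow> (real \<Rightarrow> real) \<Rightarrow> bool" where
  "geom_qp_with \<tau> g \<longleftrightarrow> (\<exists>\<gamma>. \<gamma> \<noteq> 0 \<and> (\<forall>x>0. g (x + \<tau>) = \<gamma> * g x))"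

definition geom_qp :: "(real \<Rightarrow> real) \<Rightarrow> bool" where
  "geom_qp g \<longleftrightarrow> (\<exists>\<tau>>0. geom_qp_with \<tau> g)"

end

theory Submission
  imports Defs
begin


inductive trig :: "real \<Rightarrow> (real \<Rightarrow> real) \<Rightarrow> bool" for \<omega> where
  tcos: "trig \<omega> (\<lambda>x. cos (of_int k * \<omega> * x))"
| tsin: "trig \<omega> (\<lambda>x. sin (of_int k * \<omega> * x))"
| tscale: "trig \<omega> f \<Longrightarrow> trig \<omega> (\<lambda>x. c * f x)"
| tadd: "trig \<omega> f \<Longrightarrow> trig \<omega> g \<Longrightarrow> trig \<omega> (\<lambda>x. f x + g x)"

lemma trig_eq: "trig \<omega> f \<Longrightarrow> (\<And>x. f x = g x) \<Longrightarrow> trig \<omega> g"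
proof -
  assume "trig \<omega> f" "\<And>x. f x = g x"
  then have "f = g" by auto
  then show ?thesis using \<open>trig \<omega> f\<close> by simp
qed

lemma trig_const: "trig \<omega> (\<lambda>x. c)"
  using tscale[OF tcos[of \<omega> 0], of c] by (rule trig_eq) simp

lemma pcc: fixes w x :: real shows "cos (of_int k * w * x) * cos (of_int j * w * x) = 1/2 * cos (of_int (k-j) * w * x) + 1/2 * cos (of_int (k+j) * w * x)"
proof -
  have "of_int (k-j)*w*x = of_int k*w*x - of_int j*w*x" "of_int (k+j)*w*x = of_int k*w*x + of_int j*w*x"
    by (simp_all add: algebra_simps)
  then show ?thesis by (simp only: cos_times_cos) simp
qed

lemma pcs: fixes w x :: real shows "cos (of_int k * w * x) * sin (of_int j * w * x) = (-1/2) * sin (of_int (k-j) * w * x) + 1/2 * sin (of_int (k+j) * w * x)"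
proof -
  have "of_int (k-j)*w*x = of_int k*w*x - of_int j*w*x" "of_int (k+j)*w*x = of_int k*w*x + of_int j*w*x"
    by (simp_all add: algebra_simps)
  then show ?thesis by (simp only: cos_times_sin) simp
qed

lemma psc: fixes w x :: real shows "sin (of_int k * w * x) * cos (of_int j * w * x) = 1/2 * sin (of_int (k+j) * w * x) + 1/2 * sin (of_int (k-j) * w * x)"
proof -
  have "of_int (k-j)*w*x = of_int k*w*x - of_int j*w*x" "of_int (k+j)*w*x = of_int k*w*x + of_int j*w*x"
    by (simp_all add: algebra_simps)
  then show ?thesis by (simp only: sin_times_cos) simp
qed

lemma pss: fixes w x :: real shows "sin (of_int k * w * x) * sin (of_int j * w * x) = 1/2 * cos (of_int (k-j) * w * x) + (-1/2) * cos (of_int (k+j) * w * x)"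
proof -
  have "of_int (k-j)*w*x = of_int k*w*x - of_int j*w*x" "of_int (k+j)*w*x = of_int k*w*x + of_int j*w*x"
    by (simp_all add: algebra_simps)
  then show ?thesis by (simp only: sin_times_sin) simp
qed

lemma trig_cos_mult: "trig \<omega> g \<Longrightarrow> trig \<omega> (\<lambda>x. cos (of_int k * \<omega> * x) * g x)"
proof (induction rule: trig.induct)
  case (tcos j)
  have "trig \<omega> (\<lambda>x. (1/2) * cos (of_int (k-j) * \<omega> * x) + (1/2) * cos (of_int (k+j) * \<omega> * x))"
    by (intro tadd tscale trig.intros)
  then show ?case
    by (rule trig_eq) (simp only: pcc)
next
  case (tsin j)
  have "trig \<omega> (\<lambda>x. (-1/2) * sin (of_int (k-j) * \<omega> * x) + (1/2) * sin (of_int (k+j) * \<omega> * x))"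
    by (intro tadd tscale trig.intros)
  then show ?case
    by (rule trig_eq) (simp only: pcs)
next
  case (tscale f c)
  then show ?case using trig.tscale[OF tscale.IH, of c] by (rule_tac trig_eq) (auto simp: algebra_simps)
next
  case (tadd f g)
  then show ?case using trig.tadd[OF tadd.IH] by (rule_tac trig_eq) (auto simp: algebra_simps)
qed

lemma trig_sin_mult: "trig \<omega> g \<Longrightarrow> trig \<omega> (\<lambda>x. sin (of_int k * \<omega> * x) * g x)"
proof (induction rule: trig.induct)
  case (tcos j)
  have "trig \<omega> (\<lambda>x. (1/2) * sin (of_int (k+j) * \<omega> * x) + (1/2) * sin (of_int (k-j) * \<omega> * x))"
    by (intro tadd tscale trig.intros)
  then show ?case
    by (rule trig_eq) (simp only: psc)
next
  case (tsin j)
  have "trig \<omega> (\<lambda>x. (1/2) * cos (of_int (k-j) * \<omega> * x) + (-1/2) * cos (of_int (k+j) * \<omega> * x))"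
    by (intro tadd tscale trig.intros)
  then show ?case
    by (rule trig_eq) (simp only: pss)
next
  case (tscale f c)
  then show ?case using trig.tscale[OF tscale.IH, of c] by (rule_tac trig_eq) (auto simp: algebra_simps)
next
  case (tadd f g)
  then show ?case using trig.tadd[OF tadd.IH] by (rule_tac trig_eq) (auto simp: algebra_simps)
qed

lemma trig_mult: "trig \<omega> f \<Longrightarrow> trig \<omega> g \<Longrightarrow> trig \<omega> (\<lambda>x. f x * g x)"
proof (induction rule: trig.induct)
  case (tcos k) then show ?case by (rule trig_cos_mult)
next
  case (tsin k) then show ?case by (rule trig_sin_mult)
next
  case (tscale f c)
  then show ?case using trig.tscale[OF tscale.IH[OF tscale.prems], of c] by (rule_tac trig_eq) (auto simp: algebra_simps)
next
  case (tadd f h)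
  then show ?case using trig.tadd[OF tadd.IH(1)[OF tadd.prems] tadd.IH(2)[OF tadd.prems]]
    by (rule_tac trig_eq) (auto simp: algebra_simps)
qed

lemma trig_cont: "trig \<omega> f \<Longrightarrow> continuous_on UNIV f"
proof (induction rule: trig.induct)
  case (tcos k) show ?case by (intro continuous_intros)
next
  case (tsin k) show ?case by (intro continuous_intros)
next
  case (tscale f c) show ?case by (intro continuous_intros tscale.IH)
next
  case (tadd f g) show ?case by (intro continuous_intros tadd.IH)
qed

lemma trig_poly:
  assumes "real_polynomial_function g"
  shows "trig \<omega> (\<lambda>x. g (cis (\<omega> * x)))"
  using assms
proof (induction rule: real_polynomial_function.induct)
  case (linear f)
  then interpret bounded_linear f .
  have eq: "f z = Re z * f 1 + Im z * f \<i>" for z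
  proof -
    have "z = Re z *\<^sub>R 1 + Im z *\<^sub>R \<i>" by (simp add: complex_eq_iff)
    then have "f z = f (Re z *\<^sub>R 1 + Im z *\<^sub>R \<i>)" by simp
    also have "\<dots> = Re z * f 1 + Im z * f \<i>" by (simp add: add scale)
    finally show ?thesis .
  qed
  have "trig \<omega> (\<lambda>x. f 1 * cos (of_int 1 * \<omega> * x) + f \<i> * sin (of_int 1 * \<omega> * x))"
    by (intro tadd tscale trig.intros)
  then show ?case
  proof (rule trig_eq)
    fix x
    show "f 1 * cos (of_int 1 * \<omega> * x) + f \<i> * sin (of_int 1 * \<omega> * x) = f (cis (\<omega> * x))"
      using eq[of "cis (\<omega> * x)"] by simp
  qed
next
  case (const c) then show ?case by (rule trig_const)
next
  case (add f g) then show ?case by (intro tadd)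
next
  case (mult f g) then show ?case by (intro trig_mult)
qed

lemma per_int:
  fixes p :: "real \<Rightarrow> real"
  assumes per: "\<And>x. p (x + T) = p x"
  shows "p (x + of_int n * T) = p x"
proof -
  have pos: "p (x + real m * T) = p x" for x m
  proof (induction m)
    case 0 show ?case by simp
  next
    case (Suc m)
    have "p (x + real (Suc m) * T) = p ((x + real m * T) + T)" by (simp add: algebra_simps)
    also have "\<dots> = p (x + real m * T)" by (rule per)
    also have "\<dots> = p x" by (rule Suc.IH)
    finally show ?case .
  qed
  show ?thesis
  proof (cases "n \<ge> 0")
    case True
    then show ?thesis using pos[of x "nat n"] by simp
  next
    case False
    then obtain m where "-n = int m" using nonneg_eq_int[of "-n"] by force
    then have nm: "n = - int m" by simp
    have "p (x - real m * T + real m * T) = p (x - real m * T)" by (rule pos)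
    then show ?thesis using nm by simp
  qed
qed

lemma per_reduce:
  fixes p :: "real \<Rightarrow> real"
  assumes per: "\<And>x. p (x + T) = p x" and T: "T > 0"
  obtains y where "y \<in> {0..T}" "p x = p y"
proof -
  define n where "n = \<lfloor>x / T\<rfloor>"
  define y where "y = x - of_int n * T"
  have a: "of_int n \<le> x / T" unfolding n_def by (rule of_int_floor_le)
  have b: "x / T < of_int n + 1" unfolding n_def by (rule real_of_int_floor_add_one_gt)
  have "of_int n * T \<le> x" using a T by (simp add: pos_le_divide_eq)
  moreover have "x < (of_int n + 1) * T" using b T by (simp add: pos_divide_less_eq)
  ultimately have "y \<in> {0..T}" unfolding y_def by (auto simp: algebra_simps)
  moreover have "p x = p y" using per_int[of p T, OF per, of y n] unfolding y_def by simp
  ultimately show ?thesis by (rule that)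
qed

lemma trig_orth:
  fixes p :: "real \<Rightarrow> real"
  assumes pc: "continuous_on UNIV p"
    and cs: "\<And>k::nat. integral {0..T} (\<lambda>x. cos (real k * \<omega> * x) * p x) = 0"
    and sn: "\<And>k::nat. integral {0..T} (\<lambda>x. sin (real k * \<omega> * x) * p x) = 0"
  shows "trig \<omega> f \<Longrightarrow> integral {0..T} (\<lambda>x. f x * p x) = 0"
proof (induction rule: trig.induct)
  case (tcos k)
  show ?case
  proof (cases "k \<ge> 0")
    case True
    then obtain n where "k = int n" by (metis nonneg_eq_int)
    then show ?thesis using cs[of n] by simp
  next
    case False
    then obtain n where "-k = int n" using nonneg_eq_int[of "-k"] by force
    then have "k = - int n" by simp
    then show ?thesis using cs[of n] by simp
  qed
next
  case (tsin k)
  show ?case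
  proof (cases "k \<ge> 0")
    case True
    then obtain n where "k = int n" by (metis nonneg_eq_int)
    then show ?thesis using sn[of n] by simp
  next
    case False
    then obtain n where "-k = int n" using nonneg_eq_int[of "-k"] by force
    then have kn: "k = - int n" by simp
    then have "integral {0..T} (\<lambda>x. sin (of_int k * \<omega> * x) * p x) =
        integral {0..T} (\<lambda>x. - (sin (real n * \<omega> * x) * p x))" by simp
    also have "\<dots> = 0" using sn[of n] by (simp add: integral_neg)
    finally show ?thesis .
  qed
next
  case (tscale f c)
  have "integral {0..T} (\<lambda>x. c * f x * p x) = integral {0..T} (\<lambda>x. c * (f x * p x))"
    by (simp add: mult.assoc)
  also have "\<dots> = c * integral {0..T} (\<lambda>x. f x * p x)" by simp
  finally show ?case using tscale.IH by simp
next
  case (tadd f g)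
  have i1: "(\<lambda>x. f x * p x) integrable_on {0..T}"
    using trig_cont[OF tadd.hyps(1)] pc
    by (intro integrable_continuous_interval continuous_intros) (auto intro: continuous_on_subset)
  have i2: "(\<lambda>x. g x * p x) integrable_on {0..T}"
    using trig_cont[OF tadd.hyps(2)] pc
    by (intro integrable_continuous_interval continuous_intros) (auto intro: continuous_on_subset)
  have "integral {0..T} (\<lambda>x. (f x + g x) * p x) = integral {0..T} (\<lambda>x. f x * p x + g x * p x)"
    by (simp add: distrib_right)
  also have "\<dots> = 0" using integral_add[OF i1 i2] tadd.IH by simp
  finally show ?case .
qed


lemma fourier_unique:
  fixes p :: "real \<Rightarrow> real"
  assumes T: "T > 0" and pc: "continuous_on UNIV p" and per: "\<And>x. p (x + T) = p x"
    and cs: "\<And>k::nat. integral {0..T} (\<lambda>x. cos (real k * (2*pi/T) * x) * p x) = 0"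
    and sn: "\<And>k::nat. integral {0..T} (\<lambda>x. sin (real k * (2*pi/T) * x) * p x) = 0"
  shows "p x = 0"
proof -
  define \<omega> where "\<omega> = 2*pi/T"
  have \<omega>pos: "\<omega> > 0" using T by (simp add: \<omega>_def)
  define F :: "complex \<Rightarrow> real" where "F z = p (T * Arg z / (2*pi))" for z
  define G :: "complex \<Rightarrow> real" where "G z = p (T * (Arg (-z) + pi) / (2*pi))" for z
  have FG: "F z = G z" if "z \<noteq> 0" for z
  proof (cases "Arg z \<le> 0")
    case True
    then have "T * (Arg (-z) + pi) / (2*pi) = T * Arg z / (2*pi) + T"
      using Arg_minus[OF that] by (simp add: field_simps)
    then show ?thesis unfolding F_def G_def using per by simp
  next
    case False
    then have "Arg (-z) + pi = Arg z"
      using Arg_minus[OF that] by simp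
    then show ?thesis unfolding F_def G_def by simp
  qed
  have pat: "isCont p t" for t
    using pc by (simp add: continuous_on_eq_continuous_at)
  have contF: "continuous_on (sphere 0 1) F"
  proof (rule continuous_at_imp_continuous_on, rule ballI)
    fix z :: complex assume z: "z \<in> sphere 0 1"
    then have z0: "z \<noteq> 0" by auto
    show "isCont F z"
    proof (cases "z \<in> \<real>\<^sub>\<le>\<^sub>0")
      case False
      have "isCont (\<lambda>z. T * Arg z / (2*pi)) z"
        by (intro continuous_intros continuous_at_Arg False) simp
      then show ?thesis unfolding F_def
        by (rule continuous_at_compose[of _ _ p, unfolded o_def]) (rule pat)
    next
      case True
      then have "Re z \<le> 0" "Im z = 0" by (auto simp: complex_nonpos_Reals_iff)
      then have "-z \<notin> \<real>\<^sub>\<le>\<^sub>0" using z0 by (auto simp: complex_nonpos_Reals_iff complex_eq_iff)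
      then have "isCont (\<lambda>z. Arg (-z)) z"
        using continuous_at_compose[of z uminus Arg] continuous_at_Arg
        by (auto intro: continuous_intros simp: o_def)
      then have "isCont (\<lambda>z. T * (Arg (-z) + pi) / (2*pi)) z"
        by (intro continuous_intros) simp_all
      then have "isCont G z" unfolding G_def
        by (rule continuous_at_compose[of _ _ p, unfolded o_def]) (rule pat)
      moreover have "eventually (\<lambda>w. F w = G w) (nhds z)"
        using t1_space_nhds[OF z0] by eventually_elim (use FG in auto)
      ultimately show ?thesis using isCont_cong by blast
    qed
  qed
  have Fp: "F (cis (\<omega> * y)) = p y" if y: "y \<in> {0..T}" for y
  proof -
    have t: "0 \<le> \<omega> * y" "\<omega> * y \<le> 2*pi" using y T by (auto simp: \<omega>_def field_simps)
    show ?thesis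
    proof (cases "\<omega> * y \<le> pi")
      case True
      have "-pi < \<omega> * y" using t(1) pi_gt_zero by linarith
      then have "\<omega> * y \<in> {-pi<..pi}" using True by simp
      then have "Arg (cis (\<omega> * y)) = \<omega> * y" by (rule Arg_cis)
      then show ?thesis unfolding F_def using T by (simp add: \<omega>_def)
    next
      case False
      have "cis (\<omega> * y) = cis (\<omega> * y - 2*pi)" by (simp add: complex_eq_iff cos_diff sin_diff)
      moreover have "Arg (cis (\<omega> * y - 2*pi)) = \<omega> * y - 2*pi" using t False by (intro Arg_cis) auto
      ultimately have "F (cis (\<omega> * y)) = p (T * (\<omega> * y - 2*pi) / (2*pi))" unfolding F_def by simp
      also have "T * (\<omega> * y - 2*pi) / (2*pi) = (y - T)" using T by (simp add: \<omega>_def field_simps)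
      also have "p (y - T) = p y" using per[of "y - T"] by simp
      finally show ?thesis .
    qed
  qed
  have pcT: "continuous_on {0..T} p" using pc by (rule continuous_on_subset) auto
  obtain M where M: "\<And>y. y \<in> {0..T} \<Longrightarrow> \<bar>p y\<bar> \<le> M"
    using compact_imp_bounded[OF compact_continuous_image[OF pcT compact_Icc]]
    by (force simp: bounded_iff)
  have orth: "integral {0..T} (\<lambda>y. f y * p y) = 0" if "trig \<omega> f" for f
    using trig_orth[OF pc, of T \<omega>, OF cs[unfolded \<omega>_def[symmetric]] sn[unfolded \<omega>_def[symmetric]] that] .
  have int_p2: "(\<lambda>y. p y * p y) integrable_on {0..T}"
    by (intro integrable_continuous_interval continuous_intros pcT)
  have le: "integral {0..T} (\<lambda>y. p y * p y) \<le> e * M * T" if e: "e > 0" for e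
  proof -
    obtain g where g: "real_polynomial_function g" "\<And>z. z \<in> sphere 0 1 \<Longrightarrow> \<bar>F z - g z\<bar> < e"
      using Stone_Weierstrass_real_polynomial_function[OF compact_sphere contF e] by blast
    define \<phi> where "\<phi> y = g (cis (\<omega> * y))" for y
    have tr: "trig \<omega> \<phi>" unfolding \<phi>_def by (rule trig_poly[OF g(1)])
    have phic: "continuous_on {0..T} \<phi>" using trig_cont[OF tr] by (rule continuous_on_subset) auto
    have close: "\<bar>p y - \<phi> y\<bar> \<le> e" if "y \<in> {0..T}" for y
      using g(2)[of "cis (\<omega> * y)"] Fp[OF that] unfolding \<phi>_def by simp
    have i1: "(\<lambda>y. \<phi> y * p y) integrable_on {0..T}"
      by (intro integrable_continuous_interval continuous_intros pcT phic)
    have i2: "(\<lambda>y. (p y - \<phi> y) * p y) integrable_on {0..T}"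
      by (intro integrable_continuous_interval continuous_intros pcT phic)
    have "integral {0..T} (\<lambda>y. p y * p y) = integral {0..T} (\<lambda>y. (p y - \<phi> y) * p y + \<phi> y * p y)"
      by (simp add: algebra_simps)
    also have "\<dots> = integral {0..T} (\<lambda>y. (p y - \<phi> y) * p y)"
      using integral_add[OF i2 i1] orth[OF tr] by simp
    also have "\<dots> \<le> integral {0..T} (\<lambda>y. e * M)"
    proof (rule integral_le[OF i2])
      show "(\<lambda>y. e * M) integrable_on {0..T}" by (intro integrable_continuous_interval continuous_intros)
      fix y assume y: "y \<in> {0..T}"
      have "(p y - \<phi> y) * p y \<le> \<bar>p y - \<phi> y\<bar> * \<bar>p y\<bar>" by (simp add: abs_mult[symmetric])
      also have "\<dots> \<le> e * M" using close[OF y] M[OF y] e by (intro mult_mono) auto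
      finally show "(p y - \<phi> y) * p y \<le> e * M" .
    qed
    also have "\<dots> = e * M * T" using T by simp
    finally show ?thesis .
  qed
  have "integral {0..T} (\<lambda>y. p y * p y) \<le> 0"
  proof (rule ccontr)
    assume "\<not> ?thesis"
    then have pos: "integral {0..T} (\<lambda>y. p y * p y) > 0" by simp
    have M0: "M \<ge> 0" using M[of 0] T by auto
    define e where "e = integral {0..T} (\<lambda>y. p y * p y) / (2 * (M * T + 1))"
    have MT: "M * T \<ge> 0" using M0 T by simp
    have e: "e > 0" using pos MT unfolding e_def by (intro divide_pos_pos) auto
    have "e * M * T < e * (M * T + 1)" using e by (simp add: algebra_simps)
    also have "\<dots> = integral {0..T} (\<lambda>y. p y * p y) / 2"
      using MT unfolding e_def by (simp add: field_simps)
    also have "\<dots> < integral {0..T} (\<lambda>y. p y * p y)" using pos by simp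
    finally show False using le[OF e] by simp
  qed
  moreover have "integral {0..T} (\<lambda>y. p y * p y) \<ge> 0"
    by (rule integral_nonneg[OF int_p2]) auto
  ultimately have i0: "((\<lambda>y. p y * p y) has_integral 0) (cbox 0 T)"
    using int_p2 by (simp add: has_integral_integral)
  have zero: "p y = 0" if "y \<in> {0..T}" for y
  proof -
    have "p y * p y = 0"
      using has_integral_0_cbox_imp_0[of 0 T "\<lambda>y. p y * p y" y] i0 that T pcT
      by (auto intro!: continuous_intros)
    then show ?thesis by simp
  qed
  obtain y where "y \<in> {0..T}" "p x = p y" using per_reduce[of p T x, OF per T] by blast
  then show ?thesis using zero by simp
qed


lemma floor_red:
  fixes T x :: real assumes T: "T > 0"
  obtains n :: int where "x - of_int n * T \<in> {0..T}"
proof -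
  define n where "n = \<lfloor>x / T\<rfloor>"
  have a: "of_int n \<le> x / T" unfolding n_def by (rule of_int_floor_le)
  have b: "x / T < of_int n + 1" unfolding n_def by (rule real_of_int_floor_add_one_gt)
  have "of_int n * T \<le> x" using a T by (simp add: pos_le_divide_eq)
  moreover have "x < (of_int n + 1) * T" using b T by (simp add: pos_divide_less_eq)
  ultimately have "x - of_int n * T \<in> {0..T}" by (auto simp: algebra_simps)
  then show ?thesis by (rule that)
qed

lemma integral_shift_per0:
  fixes \<phi> :: "real \<Rightarrow> real"
  assumes T: "T > 0" and c: "continuous_on UNIV \<phi>" and per: "\<And>x. \<phi> (x + T) = \<phi> x"
    and r: "r \<in> {0..T}"
  shows "integral {r..r+T} \<phi> = integral {0..T} \<phi>"
proof -
  have int: "\<phi> integrable_on {a..b}" for a b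
    by (rule integrable_continuous_interval) (rule continuous_on_subset[OF c], auto)
  have "integral {r..T} \<phi> + integral {T..r+T} \<phi> = integral {r..r+T} \<phi>"
    using r by (intro Henstock_Kurzweil_Integration.integral_combine int) auto
  then have "integral {r..r+T} \<phi> = integral {r..T} \<phi> + integral {T..r+T} \<phi>" by simp
  also have "integral {T..r+T} \<phi> = integral {0..r} \<phi>"
  proof -
    have "integral {0..r} (\<lambda>x. \<phi> (x + T)) = integral {0+T..r+T} \<phi>"
      using integral_shift_Icc_real[of 0 r \<phi> T] by (simp add: o_def add.commute)
    then show ?thesis using per by simp
  qed
  also have "integral {r..T} \<phi> + integral {0..r} \<phi> = integral {0..T} \<phi>"
    using r Henstock_Kurzweil_Integration.integral_combine[of 0 r T \<phi>] int by auto
  finally show ?thesis .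
qed

lemma integral_shift_per:
  fixes \<phi> :: "real \<Rightarrow> real"
  assumes T: "T > 0" and c: "continuous_on UNIV \<phi>" and per: "\<And>x. \<phi> (x + T) = \<phi> x"
  shows "integral {s..s+T} \<phi> = integral {0..T} \<phi>"
proof -
  obtain n where r: "s - of_int n * T \<in> {0..T}" using floor_red[OF T] by blast
  define r where "r = s - of_int n * T"
  have "integral {r..r+T} (\<lambda>x. \<phi> (x + of_int n * T)) = integral {r + of_int n * T..r+T + of_int n * T} \<phi>"
    using integral_shift_Icc_real[of r "r+T" \<phi> "of_int n * T"] by (simp add: o_def add.commute)
  also have "\<dots> = integral {s..s+T} \<phi>" unfolding r_def by (simp add: algebra_simps)
  finally have "integral {s..s+T} \<phi> = integral {r..r+T} \<phi>"
    using per_int[of \<phi> T, OF per] by simp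
  also have "\<dots> = integral {0..T} \<phi>" using r unfolding r_def[symmetric]
    by (rule integral_shift_per0[OF T c per])
  finally show ?thesis .
qed

lemma integral_shift_per':
  fixes \<phi> :: "real \<Rightarrow> real"
  assumes T: "T > 0" and c: "continuous_on UNIV \<phi>" and per: "\<And>x. \<phi> (x + T) = \<phi> x"
  shows "integral {0..T} (\<lambda>y. \<phi> (y - c)) = integral {0..T} \<phi>"
proof -
  have "integral {0..T} (\<lambda>y. \<phi> (y - c)) = integral {0 + (-c)..T + (-c)} \<phi>"
    using integral_shift_Icc_real[of 0 T \<phi> "-c"] by (simp add: o_def add.commute)
  also have "\<dots> = integral {-c..-c+T} \<phi>" by (simp add: add.commute)
  also have "\<dots> = integral {0..T} \<phi>" by (rule integral_shift_per[OF T c per])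
  finally show ?thesis .
qed

lemma per_bound:
  fixes p :: "real \<Rightarrow> real"
  assumes T: "T > 0" and c: "continuous_on UNIV p" and per: "\<And>x. p (x + T) = p x"
  obtains M where "M \<ge> 0" "\<And>x. \<bar>p x\<bar> \<le> M"
proof -
  have pcT: "continuous_on {0..T} p" using c by (rule continuous_on_subset) auto
  obtain M where M: "\<And>y. y \<in> {0..T} \<Longrightarrow> \<bar>p y\<bar> \<le> M"
    using compact_imp_bounded[OF compact_continuous_image[OF pcT compact_Icc]]
    by (force simp: bounded_iff)
  have "\<bar>p x\<bar> \<le> M" for x
  proof -
    obtain y where "y \<in> {0..T}" "p x = p y" using per_reduce[of p T x, OF per T] by blast
    then show ?thesis using M by simp
  qed
  moreover have "M \<ge> 0" using M[of 0] T by auto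
  ultimately show ?thesis using that by blast
qed

lemma mean_zero_bound:
  fixes p :: "real \<Rightarrow> real"
  assumes T: "T > 0" and c: "continuous_on UNIV p" and per: "\<And>x. p (x + T) = p x"
    and mz: "integral {0..T} p = 0"
    and M: "\<And>x. \<bar>p x\<bar> \<le> M"
  shows "a \<le> t \<Longrightarrow> \<bar>integral {a..t} p\<bar> \<le> T * M"
proof -
  assume at: "a \<le> t"
  have int: "p integrable_on {u..v}" for u v
    by (rule integrable_continuous_interval) (rule continuous_on_subset[OF c], auto)
  have full: "integral {a..a + real n * T} p = 0" for n
  proof (induction n)
    case 0 then show ?case by simp
  next
    case (Suc n)
    have "integral {a..a + real n * T} p + integral {a + real n * T..a + real n * T + T} p = integral {a..a + real n * T + T} p"
      using T by (intro Henstock_Kurzweil_Integration.integral_combine int) auto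
    then have "integral {a..a + real (Suc n) * T} p = integral {a..a + real n * T} p + integral {a + real n * T..a + real n * T + T} p"
      by (simp add: algebra_simps)
    also have "\<dots> = 0" using Suc integral_shift_per[OF T c per, of "a + real n * T"] mz by simp
    finally show ?case .
  qed
  define n where "n = nat \<lfloor>(t - a) / T\<rfloor>"
  have "real n = of_int \<lfloor>(t - a) / T\<rfloor>" unfolding n_def using at T by simp
  moreover have "of_int \<lfloor>(t - a) / T\<rfloor> * T \<le> t - a"
    using mult_right_mono[OF of_int_floor_le[of "(t-a)/T"], of T] T by simp
  moreover have "t - a < (of_int \<lfloor>(t - a) / T\<rfloor> + 1) * T"
    using mult_strict_right_mono[OF real_of_int_floor_add_one_gt[of "(t-a)/T"], of T] T by simp
  ultimately have n1: "real n * T \<le> t - a" "t - a < real n * T + T"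
    by (simp_all add: algebra_simps)
  have "integral {a..a + real n * T} p + integral {a + real n * T..t} p = integral {a..t} p"
    using n1 T by (intro Henstock_Kurzweil_Integration.integral_combine int) auto
  then have "integral {a..t} p = integral {a..a + real n * T} p + integral {a + real n * T..t} p" by simp
  also have "\<dots> = integral {a + real n * T..t} p" using full by simp
  finally have "\<bar>integral {a..t} p\<bar> = \<bar>integral {a + real n * T..t} p\<bar>" by simp
  also have "\<dots> \<le> M * (t - (a + real n * T))"
    using integral_bound[of "a + real n * T" t p M] n1 M c by (auto intro: continuous_on_subset)
  also have "\<dots> \<le> M * T" using n1 M[of 0] by (intro mult_left_mono) auto
  also have "\<dots> = T * M" by simp
  finally show ?thesis .
qed


lemma tail_est:
  fixes p :: "real \<Rightarrow> real"
  assumes c: "continuous_on UNIV p" and B: "\<And>a t. a \<le> t \<Longrightarrow> \<bar>integral {a..t} p\<bar> \<le> B"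
    and W1: "0 < W1" and W12: "W1 \<le> W2"
  shows "\<bar>integral {W1..W2} (\<lambda>w. p (y - w\<^sup>2))\<bar> \<le> B / W1"
proof -
  define a where "a = y - W2\<^sup>2"
  define b where "b = y - W1\<^sup>2"
  define P where "P t = integral {a..t} p" for t
  define g where "g w = y - w\<^sup>2" for w :: real
  have gin: "g w \<in> {a..b}" if "w \<in> {W1..W2}" for w
    using that W1 unfolding g_def a_def b_def by (auto intro!: power_mono)
  have ab: "a \<le> b" using gin[of W1] W12 by auto
  have pab: "continuous_on {a..b} p" using c by (rule continuous_on_subset) auto
  have Pder: "(P has_real_derivative p t) (at t within {a..b})" if "t \<in> {a..b}" for t
    unfolding P_def has_real_derivative_iff_has_vector_derivative
    by (rule integral_has_vector_derivative[OF pab that])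
  have Pcont: "continuous_on {a..b} P"
    unfolding P_def by (rule indefinite_integral_continuous_1) (rule integrable_continuous_interval[OF pab])
  have Pb: "\<bar>P t\<bar> \<le> B" if "a \<le> t" for t unfolding P_def using B[OF that] .
  have gder: "(g has_real_derivative (- 2 * w)) (at w within {W1..W2})" for w
    unfolding g_def by (auto intro!: derivative_eq_intros)
  have Fder: "((\<lambda>w. P (g w)) has_real_derivative (p (g w) * (- 2 * w))) (at w within {W1..W2})"
    if w: "w \<in> {W1..W2}" for w
  proof -
    have "(P has_real_derivative p (g w)) (at (g w) within {a..b})" by (rule Pder[OF gin[OF w]])
    then have "(P has_real_derivative p (g w)) (at (g w) within g ` {W1..W2})"
      by (rule has_field_derivative_subset) (use gin in auto)
    from DERIV_image_chain[OF this gder] show ?thesis by (simp add: o_def)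
  qed
  define Q where "Q w = - P (g w) / (2 * w)" for w
  have Qder: "(Q has_vector_derivative (p (g w) + P (g w) / (2 * w\<^sup>2))) (at w within {W1..W2})"
    if w: "w \<in> {W1..W2}" for w
  proof -
    have w0: "w \<noteq> 0" using w W1 by auto
    have d1: "((\<lambda>w. - P (g w)) has_real_derivative - (p (g w) * (- 2 * w))) (at w within {W1..W2})"
      by (rule DERIV_minus[OF Fder[OF w]])
    have d2: "((\<lambda>w. 2 * w) has_real_derivative 2) (at w within {W1..W2})"
      by (auto intro!: derivative_eq_intros)
    have "(Q has_real_derivative ((- (p (g w) * (- 2 * w))) * (2 * w) - (- P (g w)) * 2) / ((2 * w) * (2 * w))) (at w within {W1..W2})"
      unfolding Q_def using DERIV_divide[OF d1 d2] w0 by simp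
    then show ?thesis unfolding has_real_derivative_iff_has_vector_derivative[symmetric]
      by (rule DERIV_cong) (simp add: field_simps power2_eq_square w0)
  qed
  have gcont: "continuous_on {W1..W2} g" unfolding g_def by (intro continuous_intros)
  have PGc: "continuous_on {W1..W2} (\<lambda>w. P (g w))"
    by (rule continuous_on_compose2[OF Pcont gcont]) (use gin in auto)
  have pGc: "continuous_on {W1..W2} (\<lambda>w. p (g w))"
    by (rule continuous_on_compose2[OF pab gcont]) (use gin in auto)
  have i1: "(\<lambda>w. p (g w)) integrable_on {W1..W2}" by (rule integrable_continuous_interval[OF pGc])
  have i2: "(\<lambda>w. P (g w) / (2 * w\<^sup>2)) integrable_on {W1..W2}"
    using W1 by (intro integrable_continuous_interval continuous_intros PGc) auto
  have ftc: "((\<lambda>w. p (g w) + P (g w) / (2 * w\<^sup>2)) has_integral (Q W2 - Q W1)) {W1..W2}"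
    by (rule fundamental_theorem_of_calculus[OF W12 Qder])
  have eq: "integral {W1..W2} (\<lambda>w. p (g w)) = (Q W2 - Q W1) - integral {W1..W2} (\<lambda>w. P (g w) / (2 * w\<^sup>2))"
    using integral_add[OF i1 i2] integral_unique[OF ftc] by simp
  have i3: "(\<lambda>w. B / (2 * w\<^sup>2)) integrable_on {W1..W2}"
    using W1 by (intro integrable_continuous_interval continuous_intros) auto
  have ftc2: "((\<lambda>w. B / (2 * w\<^sup>2)) has_integral ((- B / (2 * W2)) - (- B / (2 * W1)))) {W1..W2}"
  proof (rule fundamental_theorem_of_calculus[OF W12])
    fix w assume w: "w \<in> {W1..W2}"
    then have w0: "w \<noteq> 0" using W1 by auto
    have "((\<lambda>w. - B / (2 * w)) has_real_derivative (B / (2 * w\<^sup>2))) (at w within {W1..W2})"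
      by (auto intro!: derivative_eq_intros simp: w0 power2_eq_square field_simps)
    then show "((\<lambda>w. - B / (2 * w)) has_vector_derivative (B / (2 * w\<^sup>2))) (at w within {W1..W2})"
      by (simp add: has_real_derivative_iff_has_vector_derivative)
  qed
  have b2: "\<bar>integral {W1..W2} (\<lambda>w. P (g w) / (2 * w\<^sup>2))\<bar> \<le> B / (2 * W1) - B / (2 * W2)"
  proof -
    have "\<bar>integral {W1..W2} (\<lambda>w. P (g w) / (2 * w\<^sup>2))\<bar> \<le> integral {W1..W2} (\<lambda>w. B / (2 * w\<^sup>2))"
    proof (rule integral_norm_bound_integral[OF i2 i3, unfolded real_norm_def])
      fix w assume w: "w \<in> {W1..W2}"
      have "\<bar>P (g w)\<bar> \<le> B" using Pb gin[OF w] by auto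
      then show "\<bar>P (g w) / (2 * w\<^sup>2)\<bar> \<le> B / (2 * w\<^sup>2)"
        using w W1 by (simp add: abs_div divide_right_mono)
    qed
    also have "\<dots> = B / (2 * W1) - B / (2 * W2)" using integral_unique[OF ftc2] by simp
    finally show ?thesis .
  qed
  have qb: "\<bar>Q W\<bar> \<le> B / (2 * W)" if "W \<in> {W1..W2}" for W
  proof -
    have "\<bar>P (g W)\<bar> \<le> B" using Pb gin[OF that] by auto
    then show ?thesis using that W1 unfolding Q_def by (simp add: abs_div divide_right_mono)
  qed
  have "\<bar>integral {W1..W2} (\<lambda>w. p (g w))\<bar> \<le> \<bar>Q W2\<bar> + \<bar>Q W1\<bar> + \<bar>integral {W1..W2} (\<lambda>w. P (g w) / (2 * w\<^sup>2))\<bar>"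
    unfolding eq by linarith
  also have "\<dots> \<le> B / (2 * W2) + B / (2 * W1) + (B / (2 * W1) - B / (2 * W2))"
    using qb[of W2] qb[of W1] b2 W12 by (intro add_mono) auto
  also have "\<dots> = B / W1" by (simp add: field_simps)
  finally show ?thesis unfolding g_def .
qed

lemma fresnel_limit:
  fixes p :: "real \<Rightarrow> real"
  assumes c: "continuous_on UNIV p" and B: "\<And>a t. a \<le> t \<Longrightarrow> \<bar>integral {a..t} p\<bar> \<le> B"
  obtains L where "\<And>W. W > 0 \<Longrightarrow> \<bar>integral {0..W} (\<lambda>w. p (y - w\<^sup>2)) - L\<bar> \<le> B / W"
proof -
  define R where "R W = integral {0..W} (\<lambda>w. p (y - w\<^sup>2))" for W
  have int: "(\<lambda>w. p (y - w\<^sup>2)) integrable_on {u..v}" for u v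
    by (intro integrable_continuous_interval continuous_on_compose2[OF c] continuous_intros) auto
  have diff: "\<bar>R W2 - R W1\<bar> \<le> B / W1" if "0 < W1" "W1 \<le> W2" for W1 W2
  proof -
    have "R W1 + integral {W1..W2} (\<lambda>w. p (y - w\<^sup>2)) = R W2"
      unfolding R_def using that by (intro Henstock_Kurzweil_Integration.integral_combine int) auto
    then show ?thesis using tail_est[OF c B that, of y] by simp
  qed
  have B0: "B \<ge> 0" using B[of 0 0] by simp
  have diff': "\<bar>R W2 - R W1\<bar> \<le> B / min W1 W2" if "0 < W1" "0 < W2" for W1 W2
  proof (cases "W1 \<le> W2")
    case True then show ?thesis using diff[OF that(1) True] by (simp add: min_def)
  next
    case False then show ?thesis using diff[OF that(2), of W1] by (simp add: min_def abs_minus_commute)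
  qed
  have "Cauchy (\<lambda>n. R (real n))"
  proof (rule CauchyI)
    fix e :: real assume e: "e > 0"
    obtain N :: nat where N0: "real N > max 1 (B / e)"
      using reals_Archimedean2[of "max 1 (B / e)"] by blast
    then have N: "real N > B / e" "N \<ge> 1" by auto
    have "B / real N < e" using N e B0 by (simp add: divide_less_eq mult.commute)
    show "\<exists>M. \<forall>m\<ge>M. \<forall>n\<ge>M. norm (R (real m) - R (real n)) < e"
    proof (intro exI allI impI)
      fix m n assume mn: "N \<le> m" "N \<le> n"
      then have pos: "0 < real m" "0 < real n" using N by auto
      have "B / min (real n) (real m) \<le> B / real N"
        using mn N B0 by (intro divide_left_mono) (auto simp: min_def)
      then show "norm (R (real m) - R (real n)) < e"
        using diff'[OF pos(2) pos(1)] \<open>B / real N < e\<close> by simp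
    qed
  qed
  then obtain L where L: "(\<lambda>n. R (real n)) \<longlonglongrightarrow> L" by (auto simp: Cauchy_convergent_iff convergent_def)
  have "\<bar>R W - L\<bar> \<le> B / W" if W: "W > 0" for W
  proof (rule LIMSEQ_le_const2)
    show "(\<lambda>n. \<bar>R W - R (real n)\<bar>) \<longlonglongrightarrow> \<bar>R W - L\<bar>" by (intro tendsto_intros L)
    obtain N :: nat where "N \<ge> W" using real_arch_simple by blast
    show "\<exists>N. \<forall>n\<ge>N. \<bar>R W - R (real n)\<bar> \<le> B / W"
    proof (intro exI allI impI)
      fix n assume "N \<le> n"
      then have "W \<le> real n" using \<open>N \<ge> W\<close> by linarith
      then have "\<bar>R (real n) - R W\<bar> \<le> B / W" using diff[OF W] by blast
      then show "\<bar>R W - R (real n)\<bar> \<le> B / W" by (simp add: abs_minus_commute)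
    qed
  qed
  then show ?thesis using that unfolding R_def by blast
qed


lemma sin_lower: fixes x :: real assumes "0 \<le> x" "x \<le> 1" shows "x - x^3/3 \<le> sin x"
proof -
  have "\<bar>sin x - (\<Sum>m<4. sin_coeff m * x ^ m)\<bar> \<le> inverse (fact 4) * \<bar>x\<bar> ^ 4"
    by (rule Maclaurin_sin_bound)
  moreover have "(\<Sum>m<4. sin_coeff m * x ^ m) = x - x^3/6"
  proof -
    have c: "sin_coeff 0 = 0" "sin_coeff 1 = 1" "sin_coeff (Suc 0) = 1" "sin_coeff 2 = 0" "sin_coeff 3 = -1/6"
      by (simp_all add: sin_coeff_def fact_numeral)
    have "(\<Sum>m<4. sin_coeff m * x ^ m) = sin_coeff 0 * x^0 + sin_coeff 1 * x^1 + sin_coeff 2 * x^2 + sin_coeff 3 * x^3"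
      by (simp add: eval_nat_numeral)
    then show ?thesis by (simp add: c)
  qed
  moreover have "inverse (fact 4 :: real) = 1/24" by (simp add: fact_numeral)
  moreover have "\<bar>x\<bar> ^ 4 = x^4" using assms by simp
  ultimately have b: "\<bar>sin x - (x - x^3/6)\<bar> \<le> x^4/24" by simp
  have h1: "x - x^3/6 - sin x \<le> x^4/24"
    using abs_ge_minus_self[of "sin x - (x - x^3/6)"] b by linarith
  have "x^4 \<le> x^3" using assms by (simp add: power_decreasing eval_nat_numeral mult_left_le_one_le)
  moreover have "x^3 \<ge> 0" using assms by simp
  ultimately have "x^4/24 \<le> x^3/6" by linarith
  then show ?thesis using h1 by simp
qed

lemma cos_lower: "1 - x^2/2 \<le> cos (x::real)"
proof -
  have "cos x = cos (2 * (x/2))" by simp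
  also have "\<dots> = 1 - 2 * sin (x/2) ^ 2" by (rule cos_double_sin)
  finally have c: "cos x = 1 - 2 * sin (x/2) ^ 2" .
  have "sin (x/2) ^ 2 \<le> (x/2)^2"
    using abs_sin_x_le_abs_x[of "x/2"] by (metis abs_ge_zero power2_abs power_mono)
  then show ?thesis unfolding c by (simp add: power_divide)
qed

lemma fresnel_sin_lower:
  fixes \<omega> :: real assumes om: "\<omega> > 0"
  defines "w0 \<equiv> sqrt (1 / (2 * \<omega>))"
  shows "W \<ge> w0 \<Longrightarrow> integral {0..W} (\<lambda>w. sin (\<omega> * w\<^sup>2)) \<ge> w0 / 28"
proof -
  assume W: "W \<ge> w0"
  have w0p: "w0 > 0" unfolding w0_def using om by simp
  have ow: "\<omega> * w0\<^sup>2 = 1/2" unfolding w0_def using om by simp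
  have int: "(\<lambda>w. sin (\<omega> * w\<^sup>2)) integrable_on {u..v}" for u v
    by (intro integrable_continuous_interval continuous_intros)
  have Wp: "W > 0" using W w0p by simp
  have I1: "((\<lambda>w. \<omega> * w\<^sup>2 - \<omega>^3 * w^6 / 3) has_integral ((\<omega> * w0^3 / 3 - \<omega>^3 * w0^7 / 21) - (\<omega> * 0^3 / 3 - \<omega>^3 * 0^7 / 21))) {0..w0}"
  proof (rule fundamental_theorem_of_calculus)
    show "0 \<le> w0" using w0p by simp
    fix w assume "w \<in> {0..w0}"
    show "((\<lambda>w. \<omega> * w^3 / 3 - \<omega>^3 * w^7 / 21) has_vector_derivative (\<omega> * w\<^sup>2 - \<omega>^3 * w^6 / 3)) (at w within {0..w0})"
      unfolding has_real_derivative_iff_has_vector_derivative[symmetric]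
      by (auto intro!: derivative_eq_intros simp: field_simps eval_nat_numeral)
  qed
  have e1: "\<omega> * w0^3 = w0 / 2" using ow by (simp add: eval_nat_numeral algebra_simps)
  have e2: "\<omega>^3 * w0^7 = w0 / 8"
  proof -
    have "\<omega>^3 * w0^7 = (\<omega> * w0\<^sup>2)^3 * w0" by (simp add: eval_nat_numeral algebra_simps)
    then show ?thesis using ow by (simp add: power_divide)
  qed
  have S1: "integral {0..w0} (\<lambda>w. sin (\<omega> * w\<^sup>2)) \<ge> w0 / 6 - w0 / 168"
  proof -
    have "integral {0..w0} (\<lambda>w. \<omega> * w\<^sup>2 - \<omega>^3 * w^6 / 3) \<le> integral {0..w0} (\<lambda>w. sin (\<omega> * w\<^sup>2))"
    proof (rule integral_le)
      show "(\<lambda>w. \<omega> * w\<^sup>2 - \<omega>^3 * w^6 / 3) integrable_on {0..w0}" using I1 by blast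
      show "(\<lambda>w. sin (\<omega> * w\<^sup>2)) integrable_on {0..w0}" by (rule int)
      fix w assume w: "w \<in> {0..w0}"
      have "\<omega> * w\<^sup>2 \<le> \<omega> * w0\<^sup>2" using w om by (auto intro!: mult_left_mono power_mono)
      then have le1: "\<omega> * w\<^sup>2 \<le> 1" using ow by simp
      have "(\<omega> * w\<^sup>2) - (\<omega> * w\<^sup>2)^3/3 \<le> sin (\<omega> * w\<^sup>2)" using om le1 by (intro sin_lower) auto
      moreover have "(\<omega> * w\<^sup>2)^3 = \<omega>^3 * w^6" by (simp add: power_mult_distrib flip: power_mult)
      ultimately show "\<omega> * w\<^sup>2 - \<omega>^3 * w^6 / 3 \<le> sin (\<omega> * w\<^sup>2)" by simp
    qed
    moreover have "integral {0..w0} (\<lambda>w. \<omega> * w\<^sup>2 - \<omega>^3 * w^6 / 3) = w0 / 6 - w0 / 168"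
      using integral_unique[OF I1] e1 e2 by simp
    ultimately show ?thesis by simp
  qed
  define Q where "Q w = - cos (\<omega> * w\<^sup>2) / (2 * \<omega> * w)" for w
  have ftc: "((\<lambda>w. sin (\<omega> * w\<^sup>2) + cos (\<omega> * w\<^sup>2) / (2 * \<omega> * w\<^sup>2)) has_integral (Q W - Q w0)) {w0..W}"
  proof (rule fundamental_theorem_of_calculus[OF W])
    fix w assume w: "w \<in> {w0..W}"
    then have w0': "w \<noteq> 0" using w0p by auto
    show "(Q has_vector_derivative (sin (\<omega> * w\<^sup>2) + cos (\<omega> * w\<^sup>2) / (2 * \<omega> * w\<^sup>2))) (at w within {w0..W})"
      unfolding has_real_derivative_iff_has_vector_derivative[symmetric] Q_def
      using om w0' by (auto intro!: derivative_eq_intros simp: field_simps power2_eq_square)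
  qed
  have ic: "(\<lambda>w. cos (\<omega> * w\<^sup>2) / (2 * \<omega> * w\<^sup>2)) integrable_on {w0..W}"
    using w0p om by (intro integrable_continuous_interval continuous_intros) auto
  have ftc2: "((\<lambda>w. 1 / (2 * \<omega> * w\<^sup>2)) has_integral ((- 1 / (2 * \<omega> * W)) - (- 1 / (2 * \<omega> * w0)))) {w0..W}"
  proof (rule fundamental_theorem_of_calculus[OF W])
    fix w assume w: "w \<in> {w0..W}"
    then have w0': "w \<noteq> 0" using w0p by auto
    show "((\<lambda>w. - 1 / (2 * \<omega> * w)) has_vector_derivative (1 / (2 * \<omega> * w\<^sup>2))) (at w within {w0..W})"
      unfolding has_real_derivative_iff_has_vector_derivative[symmetric]
      using om w0' by (auto intro!: derivative_eq_intros simp: field_simps power2_eq_square)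
  qed
  have cb: "integral {w0..W} (\<lambda>w. cos (\<omega> * w\<^sup>2) / (2 * \<omega> * w\<^sup>2)) \<le> 1 / (2 * \<omega> * w0) - 1 / (2 * \<omega> * W)"
  proof -
    have "integral {w0..W} (\<lambda>w. cos (\<omega> * w\<^sup>2) / (2 * \<omega> * w\<^sup>2)) \<le> integral {w0..W} (\<lambda>w. 1 / (2 * \<omega> * w\<^sup>2))"
    proof (rule integral_le[OF ic])
      show "(\<lambda>w. 1 / (2 * \<omega> * w\<^sup>2)) integrable_on {w0..W}" using ftc2 by blast
      fix w assume "w \<in> {w0..W}"
      then show "cos (\<omega> * w\<^sup>2) / (2 * \<omega> * w\<^sup>2) \<le> 1 / (2 * \<omega> * w\<^sup>2)"
        using om w0p by (intro divide_right_mono) auto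
    qed
    also have "\<dots> = 1 / (2 * \<omega> * w0) - 1 / (2 * \<omega> * W)" using integral_unique[OF ftc2] by simp
    finally show ?thesis .
  qed
  define A where "A = 1 / (2 * \<omega> * w0)"
  have Aw: "A = w0"
  proof -
    have eq: "2 * \<omega> * w0 * w0 = 1" using ow by (simp add: power2_eq_square algebra_simps)
    have ne: "2 * \<omega> * w0 \<noteq> 0" using om w0p by simp
    have "A = (2 * \<omega> * w0 * w0) / (2 * \<omega> * w0)" unfolding A_def using eq by simp
    also have "\<dots> = w0" using ne by simp
    finally show ?thesis .
  qed
  have S: "integral {w0..W} (\<lambda>w. sin (\<omega> * w\<^sup>2)) = (Q W - Q w0) - integral {w0..W} (\<lambda>w. cos (\<omega> * w\<^sup>2) / (2 * \<omega> * w\<^sup>2))"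
    using integral_add[OF int ic] integral_unique[OF ftc] by simp
  have q1: "Q W \<ge> - 1 / (2 * \<omega> * W)"
    unfolding Q_def using om Wp by (intro divide_right_mono) (auto simp: divide_simps)
  have q2: "- Q w0 = cos (1/2) * A" unfolding Q_def ow A_def by simp
  have c8: "cos (1/2::real) \<ge> 7/8" using cos_lower[of "1/2"] by (simp add: power2_eq_square)
  have "cos (1/2) * A \<ge> 7/8 * A" using c8 Aw w0p by (intro mult_right_mono) auto
  then have "integral {w0..W} (\<lambda>w. sin (\<omega> * w\<^sup>2)) \<ge> 7/8 * A - A"
    using S q1 q2 cb unfolding A_def by linarith
  then have "integral {w0..W} (\<lambda>w. sin (\<omega> * w\<^sup>2)) \<ge> - w0 / 8" using Aw by simp
  then have S2: "integral {w0..W} (\<lambda>w. sin (\<omega> * w\<^sup>2)) \<ge> - w0 / 8" .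
  have "integral {0..w0} (\<lambda>w. sin (\<omega> * w\<^sup>2)) + integral {w0..W} (\<lambda>w. sin (\<omega> * w\<^sup>2)) = integral {0..W} (\<lambda>w. sin (\<omega> * w\<^sup>2))"
    using W w0p by (intro Henstock_Kurzweil_Integration.integral_combine int) auto
  then show ?thesis using S1 S2 by simp
qed


lemma zero_lim:
  fixes x K :: real
  assumes "\<And>W. W > 0 \<Longrightarrow> \<bar>x\<bar> \<le> K / W"
  shows "x = 0"
proof (rule ccontr)
  assume x: "x \<noteq> 0"
  define W where "W = 2 * (\<bar>K\<bar> + 1) / \<bar>x\<bar>"
  have W: "W > 0" using x unfolding W_def by (simp add: add_pos_nonneg)
  have "\<bar>x\<bar> \<le> K / W" by (rule assms[OF W])
  also have "K / W = K * \<bar>x\<bar> / (2 * (\<bar>K\<bar> + 1))" unfolding W_def using x by simp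
  also have "\<dots> \<le> \<bar>K\<bar> * \<bar>x\<bar> / (2 * (\<bar>K\<bar> + 1))"
    by (intro divide_right_mono mult_right_mono) auto
  also have "\<dots> < \<bar>x\<bar>"
  proof -
    have D: "0 < 2 * (\<bar>K\<bar> + 1)" by (simp add: add_pos_nonneg)
    have x0: "0 < \<bar>x\<bar>" using x by simp
    have k0: "0 \<le> \<bar>K\<bar> * \<bar>x\<bar>" by simp
    have "\<bar>x\<bar> * (2 * (\<bar>K\<bar> + 1)) = \<bar>K\<bar> * \<bar>x\<bar> + (\<bar>K\<bar> * \<bar>x\<bar> + 2 * \<bar>x\<bar>)"
      by (simp add: algebra_simps)
    then have "\<bar>K\<bar> * \<bar>x\<bar> < \<bar>x\<bar> * (2 * (\<bar>K\<bar> + 1))" using x0 k0 by linarith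
    then show ?thesis using pos_divide_less_eq[OF D] by blast
  qed
  finally show False by simp
qed

lemma le_lim:
  fixes a b K T :: real
  assumes T: "T > 0" and le: "\<And>N::nat. N \<ge> 1 \<Longrightarrow> a \<le> b + K / sqrt (real N * T)"
  shows "a \<le> b"
proof (rule LIMSEQ_le_const)
  have "filterlim (\<lambda>N::nat. real N * T) at_top sequentially"
    by (rule filterlim_at_top_mult_tendsto_pos[OF tendsto_const T filterlim_real_sequentially])
  then have "filterlim (\<lambda>N::nat. sqrt (real N * T)) at_top sequentially"
    by (rule filterlim_compose[OF sqrt_at_top])
  then have "(\<lambda>N::nat. K / sqrt (real N * T)) \<longlonglongrightarrow> 0"
    by (intro tendsto_divide_0[OF tendsto_const] filterlim_at_top_imp_at_infinity)
  then show "(\<lambda>N::nat. b + K / sqrt (real N * T)) \<longlonglongrightarrow> b"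
    using tendsto_add[OF tendsto_const[of b]] by fastforce
  show "\<exists>N. \<forall>n\<ge>N. a \<le> b + K / sqrt (real n * T)" using le by blast
qed


lemma cos_per: "cos (real k * (2*pi/T) * (x + T)) = cos (real k * (2*pi/T) * x)" if "T > 0" for T :: real
proof -
  have "real k * (2*pi/T) * (x + T) = real k * (2*pi/T) * x + 2 * real k * pi" using that by (simp add: field_simps)
  then show ?thesis by (simp add: cos_add)
qed

lemma sin_per: "sin (real k * (2*pi/T) * (x + T)) = sin (real k * (2*pi/T) * x)" if "T > 0" for T :: real
proof -
  have "real k * (2*pi/T) * (x + T) = real k * (2*pi/T) * x + 2 * real k * pi" using that by (simp add: field_simps)
  then show ?thesis by (simp add: sin_add)
qed

lemma mean_cos: assumes T: "T > 0" and k: "k \<ge> 1"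
  shows "integral {0..T} (\<lambda>y. cos (real k * (2*pi/T) * y)) = 0"
proof -
  define \<omega> where "\<omega> = real k * (2*pi/T)"
  have om: "\<omega> > 0" using T k by (simp add: \<omega>_def)
  have "((\<lambda>y. cos (\<omega> * y)) has_integral (sin (\<omega> * T) / \<omega> - sin (\<omega> * 0) / \<omega>)) {0..T}"
  proof (rule fundamental_theorem_of_calculus)
    show "0 \<le> T" using T by simp
    fix y assume "y \<in> {0..T}"
    show "((\<lambda>y. sin (\<omega> * y) / \<omega>) has_vector_derivative cos (\<omega> * y)) (at y within {0..T})"
      unfolding has_real_derivative_iff_has_vector_derivative[symmetric]
      using om by (auto intro!: derivative_eq_intros)
  qed
  moreover have "\<omega> * T = 2 * real k * pi" using T by (simp add: \<omega>_def field_simps)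
  ultimately show ?thesis unfolding \<omega>_def by (simp add: integral_unique)
qed

lemma mean_sin: assumes T: "T > 0" and k: "k \<ge> 1"
  shows "integral {0..T} (\<lambda>y. sin (real k * (2*pi/T) * y)) = 0"
proof -
  define \<omega> where "\<omega> = real k * (2*pi/T)"
  have om: "\<omega> > 0" using T k by (simp add: \<omega>_def)
  have "((\<lambda>y. sin (\<omega> * y)) has_integral ((- cos (\<omega> * T) / \<omega>) - (- cos (\<omega> * 0) / \<omega>))) {0..T}"
  proof (rule fundamental_theorem_of_calculus)
    show "0 \<le> T" using T by simp
    fix y assume "y \<in> {0..T}"
    show "((\<lambda>y. - cos (\<omega> * y) / \<omega>) has_vector_derivative sin (\<omega> * y)) (at y within {0..T})"
      unfolding has_real_derivative_iff_has_vector_derivative[symmetric]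
      using om by (auto intro!: derivative_eq_intros)
  qed
  moreover have "\<omega> * T = 2 * real k * pi" using T by (simp add: \<omega>_def field_simps)
  ultimately show ?thesis unfolding \<omega>_def by (simp add: integral_unique)
qed

lemma shift_trig:
  fixes p :: "real \<Rightarrow> real" and k :: nat and c T :: real
  assumes T: "T > 0" and pc: "continuous_on UNIV p" and per: "\<And>x. p (x + T) = p x"
  defines "\<omega> \<equiv> real k * (2*pi/T)"
  defines "a \<equiv> integral {0..T} (\<lambda>t. cos (\<omega> * t) * p t)"
  defines "b \<equiv> integral {0..T} (\<lambda>t. sin (\<omega> * t) * p t)"
  shows "integral {0..T} (\<lambda>y. cos (\<omega> * y) * p (y - c)) = cos (\<omega> * c) * a - sin (\<omega> * c) * b"
    and "integral {0..T} (\<lambda>y. sin (\<omega> * y) * p (y - c)) = sin (\<omega> * c) * a + cos (\<omega> * c) * b"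
proof -
  have ia: "(\<lambda>t. cos (\<omega> * t) * p t) integrable_on {0..T}"
    by (intro integrable_continuous_interval continuous_intros continuous_on_subset[OF pc]) auto
  have ib: "(\<lambda>t. sin (\<omega> * t) * p t) integrable_on {0..T}"
    by (intro integrable_continuous_interval continuous_intros continuous_on_subset[OF pc]) auto
  define \<phi> where "\<phi> t = cos (\<omega> * (t + c)) * p t" for t
  have \<phi>c: "continuous_on UNIV \<phi>" unfolding \<phi>_def by (intro continuous_intros pc)
  have \<phi>per: "\<phi> (x + T) = \<phi> x" for x
    using cos_per[OF T, of k "x + c"] per[of x] unfolding \<phi>_def \<omega>_def by (simp add: algebra_simps)
  have "integral {0..T} (\<lambda>y. cos (\<omega> * y) * p (y - c)) = integral {0..T} (\<lambda>y. \<phi> (y - c))"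
    unfolding \<phi>_def by simp
  also have "\<dots> = integral {0..T} \<phi>" by (rule integral_shift_per'[OF T \<phi>c \<phi>per])
  also have "\<dots> = integral {0..T} (\<lambda>t. cos (\<omega> * c) * (cos (\<omega> * t) * p t) - sin (\<omega> * c) * (sin (\<omega> * t) * p t))"
    unfolding \<phi>_def by (simp add: distrib_left cos_add algebra_simps)
  also have "\<dots> = cos (\<omega> * c) * a - sin (\<omega> * c) * b"
    unfolding a_def b_def
    by (subst integral_diff) (auto intro: integrable_on_mult_right ia ib)
  finally show "integral {0..T} (\<lambda>y. cos (\<omega> * y) * p (y - c)) = cos (\<omega> * c) * a - sin (\<omega> * c) * b" .
  define \<psi> where "\<psi> t = sin (\<omega> * (t + c)) * p t" for t
  have \<psi>c: "continuous_on UNIV \<psi>" unfolding \<psi>_def by (intro continuous_intros pc)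
  have \<psi>per: "\<psi> (x + T) = \<psi> x" for x
    using sin_per[OF T, of k "x + c"] per[of x] unfolding \<psi>_def \<omega>_def by (simp add: algebra_simps)
  have "integral {0..T} (\<lambda>y. sin (\<omega> * y) * p (y - c)) = integral {0..T} (\<lambda>y. \<psi> (y - c))"
    unfolding \<psi>_def by simp
  also have "\<dots> = integral {0..T} \<psi>" by (rule integral_shift_per'[OF T \<psi>c \<psi>per])
  also have "\<dots> = integral {0..T} (\<lambda>t. sin (\<omega> * c) * (cos (\<omega> * t) * p t) + cos (\<omega> * c) * (sin (\<omega> * t) * p t))"
    unfolding \<psi>_def by (simp add: distrib_left sin_add algebra_simps)
  also have "\<dots> = sin (\<omega> * c) * a + cos (\<omega> * c) * b"
    unfolding a_def b_def
    by (subst integral_add) (auto intro: integrable_on_mult_right ia ib)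
  finally show "integral {0..T} (\<lambda>y. sin (\<omega> * y) * p (y - c)) = sin (\<omega> * c) * a + cos (\<omega> * c) * b" .
qed

lemma swap_R:
  fixes p \<phi> :: "real \<Rightarrow> real"
  assumes pc: "continuous_on UNIV p" and \<phi>c: "continuous_on UNIV \<phi>" and W: "W \<ge> 0" and T: "T \<ge> 0"
  shows "integral {0..T} (\<lambda>y. \<phi> y * integral {0..W} (\<lambda>w. p (y - w\<^sup>2)))
       = integral {0..W} (\<lambda>w. integral {0..T} (\<lambda>y. \<phi> y * p (y - w\<^sup>2)))"
    and "continuous_on UNIV (\<lambda>y. integral {0..W} (\<lambda>w. p (y - w\<^sup>2)))"
proof -
  have c2: "continuous_on UNIV (\<lambda>z::real\<times>real. \<phi> (fst z) * p (fst z - (snd z)\<^sup>2))"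
    by (intro continuous_intros continuous_on_compose2[OF pc] continuous_on_compose2[OF \<phi>c]) auto
  have c3: "continuous_on UNIV (\<lambda>z::real\<times>real. p (fst z - (snd z)\<^sup>2))"
    by (intro continuous_intros continuous_on_compose2[OF pc]) auto
  have "integral (cbox 0 T) (\<lambda>y. integral (cbox 0 W) (\<lambda>w. \<phi> y * p (y - w\<^sup>2)))
      = integral (cbox 0 W) (\<lambda>w. integral (cbox 0 T) (\<lambda>y. \<phi> y * p (y - w\<^sup>2)))"
  proof (rule integral_swap_continuous)
    have eq: "(\<lambda>(y, w). \<phi> y * p (y - w\<^sup>2)) = (\<lambda>z::real\<times>real. \<phi> (fst z) * p (fst z - (snd z)\<^sup>2))"
      by (auto simp: fun_eq_iff)
    show "continuous_on (cbox (0, 0) (T, W)) (\<lambda>(y, w). \<phi> y * p (y - w\<^sup>2))"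
      unfolding eq by (rule continuous_on_subset[OF c2]) auto
  qed
  then show "integral {0..T} (\<lambda>y. \<phi> y * integral {0..W} (\<lambda>w. p (y - w\<^sup>2)))
       = integral {0..W} (\<lambda>w. integral {0..T} (\<lambda>y. \<phi> y * p (y - w\<^sup>2)))"
    by simp
  have "continuous_on UNIV (\<lambda>y. integral (cbox 0 W) (\<lambda>w. p (y - w\<^sup>2)))"
  proof (rule integral_continuous_on_param)
    have eq: "(\<lambda>(y, t). p (y - t\<^sup>2)) = (\<lambda>z::real\<times>real. p (fst z - (snd z)\<^sup>2))"
      by (auto simp: fun_eq_iff)
    show "continuous_on (UNIV \<times> cbox 0 W) (\<lambda>(y, t). p (y - t\<^sup>2))"
      unfolding eq by (rule continuous_on_subset[OF c3]) auto
  qed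
  then show "continuous_on UNIV (\<lambda>y. integral {0..W} (\<lambda>w. p (y - w\<^sup>2)))" by simp
qed


lemma coeff_zero:
  fixes p :: "real \<Rightarrow> real" and T B C :: real and k :: nat
  assumes T: "T > 0" and pc: "continuous_on UNIV p" and per: "\<And>x. p (x + T) = p x"
    and B0: "B \<ge> 0"
    and Rc: "\<And>W y. W > 0 \<Longrightarrow> y \<in> {0..T} \<Longrightarrow> \<bar>integral {0..W} (\<lambda>w. p (y - w\<^sup>2)) - C\<bar> \<le> B / W"
    and k: "k \<ge> 1"
  shows "integral {0..T} (\<lambda>x. cos (real k * (2*pi/T) * x) * p x) = 0"
    and "integral {0..T} (\<lambda>x. sin (real k * (2*pi/T) * x) * p x) = 0"
proof -
  define \<omega> where "\<omega> = real k * (2*pi/T)"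
  have om: "\<omega> > 0" using T k by (simp add: \<omega>_def)
  define a where "a = integral {0..T} (\<lambda>t. cos (\<omega> * t) * p t)"
  define b where "b = integral {0..T} (\<lambda>t. sin (\<omega> * t) * p t)"
  define R where "R W y = integral {0..W} (\<lambda>w. p (y - w\<^sup>2))" for W y
  define Cf where "Cf W = integral {0..W} (\<lambda>w. cos (\<omega> * w\<^sup>2))" for W
  define Sf where "Sf W = integral {0..W} (\<lambda>w. sin (\<omega> * w\<^sup>2))" for W
  have icos: "(\<lambda>w. cos (\<omega> * w\<^sup>2)) integrable_on {0..W}" for W
    by (intro integrable_continuous_interval continuous_intros)
  have isin: "(\<lambda>w. sin (\<omega> * w\<^sup>2)) integrable_on {0..W}" for W
    by (intro integrable_continuous_interval continuous_intros)
  have shc: "integral {0..T} (\<lambda>y. cos (\<omega> * y) * p (y - c)) = cos (\<omega> * c) * a - sin (\<omega> * c) * b" for c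
    using shift_trig(1)[OF T pc per, of k c] unfolding \<omega>_def a_def b_def .
  have shs: "integral {0..T} (\<lambda>y. sin (\<omega> * y) * p (y - c)) = sin (\<omega> * c) * a + cos (\<omega> * c) * b" for c
    using shift_trig(2)[OF T pc per, of k c] unfolding \<omega>_def a_def b_def .
  have Rcont: "continuous_on UNIV (R W)" if "W \<ge> 0" for W
    unfolding R_def using swap_R(2)[OF pc continuous_on_const that, of 0] by simp
  have eq1: "integral {0..T} (\<lambda>y. cos (\<omega> * y) * R W y) = a * Cf W - b * Sf W" if W: "W \<ge> 0" for W
  proof -
    have "integral {0..T} (\<lambda>y. cos (\<omega> * y) * R W y) = integral {0..W} (\<lambda>w. integral {0..T} (\<lambda>y. cos (\<omega> * y) * p (y - w\<^sup>2)))"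
      unfolding R_def by (rule swap_R(1)[OF pc _ W]) (use T in \<open>auto intro!: continuous_intros\<close>)
    also have "\<dots> = integral {0..W} (\<lambda>w. cos (\<omega> * w\<^sup>2) * a - sin (\<omega> * w\<^sup>2) * b)"
      by (simp only: shc)
    also have "\<dots> = integral {0..W} (\<lambda>w. a * cos (\<omega> * w\<^sup>2) - b * sin (\<omega> * w\<^sup>2))"
      by (simp only: mult.commute)
    also have "\<dots> = a * Cf W - b * Sf W"
      unfolding Cf_def Sf_def by (subst integral_diff) (auto intro: integrable_on_mult_right icos isin)
    finally show ?thesis .
  qed
  have eq2: "integral {0..T} (\<lambda>y. sin (\<omega> * y) * R W y) = a * Sf W + b * Cf W" if W: "W \<ge> 0" for W
  proof -
    have "integral {0..T} (\<lambda>y. sin (\<omega> * y) * R W y) = integral {0..W} (\<lambda>w. integral {0..T} (\<lambda>y. sin (\<omega> * y) * p (y - w\<^sup>2)))"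
      unfolding R_def by (rule swap_R(1)[OF pc _ W]) (use T in \<open>auto intro!: continuous_intros\<close>)
    also have "\<dots> = integral {0..W} (\<lambda>w. sin (\<omega> * w\<^sup>2) * a + cos (\<omega> * w\<^sup>2) * b)"
      by (simp only: shs)
    also have "\<dots> = integral {0..W} (\<lambda>w. a * sin (\<omega> * w\<^sup>2) + b * cos (\<omega> * w\<^sup>2))"
      by (simp only: mult.commute)
    also have "\<dots> = a * Sf W + b * Cf W"
      unfolding Cf_def Sf_def by (subst integral_add) (auto intro: integrable_on_mult_right icos isin)
    finally show ?thesis .
  qed
  have mc: "integral {0..T} (\<lambda>y. cos (\<omega> * y)) = 0" unfolding \<omega>_def by (rule mean_cos[OF T k])
  have ms: "integral {0..T} (\<lambda>y. sin (\<omega> * y)) = 0" unfolding \<omega>_def by (rule mean_sin[OF T k])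
  have bnd: "\<bar>integral {0..T} (\<lambda>y. f (\<omega> * y) * R W y)\<bar> \<le> B / W * T"
    if W: "W > 0" and fc: "continuous_on UNIV f" and fb: "\<And>x. \<bar>f x\<bar> \<le> 1"
      and fm: "integral {0..T} (\<lambda>y. f (\<omega> * y)) = 0" for W and f :: "real \<Rightarrow> real"
  proof -
    have c1: "continuous_on {0..T} (\<lambda>y. f (\<omega> * y))"
      by (intro continuous_on_compose2[OF fc] continuous_intros) auto
    have c2: "continuous_on {0..T} (R W)" using Rcont[of W] W by (auto intro: continuous_on_subset)
    have i1: "(\<lambda>y. f (\<omega> * y) * (R W y - C)) integrable_on {0..T}"
      by (intro integrable_continuous_interval continuous_intros c1 c2)
    have i2: "(\<lambda>y. C * f (\<omega> * y)) integrable_on {0..T}"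
      by (intro integrable_continuous_interval continuous_intros c1)
    have "integral {0..T} (\<lambda>y. f (\<omega> * y) * R W y) = integral {0..T} (\<lambda>y. f (\<omega> * y) * (R W y - C) + C * f (\<omega> * y))"
      by (simp add: algebra_simps)
    also have "\<dots> = integral {0..T} (\<lambda>y. f (\<omega> * y) * (R W y - C))"
      using integral_add[OF i1 i2] fm by simp
    finally have e: "integral {0..T} (\<lambda>y. f (\<omega> * y) * R W y) = integral {0..T} (\<lambda>y. f (\<omega> * y) * (R W y - C))" .
    have "norm (integral {0..T} (\<lambda>y. f (\<omega> * y) * (R W y - C))) \<le> B / W * (T - 0)"
    proof (rule integral_bound)
      show "0 \<le> T" using T by simp
      show "continuous_on {0..T} (\<lambda>y. f (\<omega> * y) * (R W y - C))" by (intro continuous_intros c1 c2)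
      fix y assume y: "y \<in> {0..T}"
      have "\<bar>f (\<omega> * y)\<bar> * \<bar>R W y - C\<bar> \<le> 1 * (B / W)"
        using fb Rc[OF W y] unfolding R_def by (intro mult_mono) auto
      then show "norm (f (\<omega> * y) * (R W y - C)) \<le> B / W" by (simp add: abs_mult)
    qed
    then show ?thesis using e by simp
  qed
  have cc: "continuous_on (UNIV::real set) (cos::real\<Rightarrow>real)" using continuous_on_cos[of UNIV "\<lambda>x::real. x"] by (simp add: continuous_on_id)
  have sc: "continuous_on (UNIV::real set) (sin::real\<Rightarrow>real)" using continuous_on_sin[of UNIV "\<lambda>x::real. x"] by (simp add: continuous_on_id)
  have b1: "\<bar>a * Cf W - b * Sf W\<bar> \<le> B / W * T" if W: "W > 0" for W
    using bnd[OF W cc] mc eq1[of W] W by auto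
  have b2: "\<bar>a * Sf W + b * Cf W\<bar> \<le> B / W * T" if W: "W > 0" for W
    using bnd[OF W sc] ms eq2[of W] W by auto
  define pcs where "pcs t = cos (\<omega> * t)" for t
  define psn where "psn t = - sin (\<omega> * t)" for t
  have pcsc: "continuous_on UNIV pcs" unfolding pcs_def by (intro continuous_intros)
  have psnc: "continuous_on UNIV psn" unfolding psn_def by (intro continuous_intros)
  have pcsper: "pcs (x + T) = pcs x" for x unfolding pcs_def \<omega>_def by (rule cos_per[OF T])
  have psnper: "psn (x + T) = psn x" for x unfolding psn_def \<omega>_def using sin_per[OF T] by simp
  have pcsm: "integral {0..T} pcs = 0" unfolding pcs_def using mc by simp
  have psnm: "integral {0..T} psn = 0" unfolding psn_def using ms by simp
  have pcsB: "a' \<le> t \<Longrightarrow> \<bar>integral {a'..t} pcs\<bar> \<le> T * 1" for a' t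
    by (rule mean_zero_bound[OF T pcsc pcsper pcsm]) (auto simp: pcs_def)
  have psnB: "a' \<le> t \<Longrightarrow> \<bar>integral {a'..t} psn\<bar> \<le> T * 1" for a' t
    by (rule mean_zero_bound[OF T psnc psnper psnm]) (auto simp: psn_def)
  obtain Fc where Fc: "\<And>W. W > 0 \<Longrightarrow> \<bar>integral {0..W} (\<lambda>w. pcs (0 - w\<^sup>2)) - Fc\<bar> \<le> T * 1 / W"
    using fresnel_limit[OF pcsc pcsB] by blast
  obtain Fs where Fs: "\<And>W. W > 0 \<Longrightarrow> \<bar>integral {0..W} (\<lambda>w. psn (0 - w\<^sup>2)) - Fs\<bar> \<le> T * 1 / W"
    using fresnel_limit[OF psnc psnB] by blast
  have Fc': "\<bar>Cf W - Fc\<bar> \<le> T / W" if "W > 0" for W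
    using Fc[OF that] unfolding Cf_def pcs_def by simp
  have Fs': "\<bar>Sf W - Fs\<bar> \<le> T / W" if "W > 0" for W
    using Fs[OF that] unfolding Sf_def psn_def by simp
  define w0 where "w0 = sqrt (1 / (2 * \<omega>))"
  have w0p: "w0 > 0" unfolding w0_def using om by simp
  define W1 where "W1 = max w0 (56 * T / w0)"
  have W1p: "W1 > 0" using w0p unfolding W1_def by (simp add: less_max_iff_disj)
  have "Sf W1 \<ge> w0 / 28" unfolding Sf_def w0_def by (rule fresnel_sin_lower[OF om]) (simp add: W1_def w0_def)
  moreover have "T / W1 \<le> w0 / 56"
  proof -
    have "56 * T / w0 \<le> W1" unfolding W1_def by simp
    then have "56 * T \<le> W1 * w0" using w0p by (simp add: divide_le_eq)
    then show ?thesis using W1p w0p by (simp add: divide_le_eq field_simps)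
  qed
  ultimately have "Fs > 0" using Fs'[OF W1p] w0p by linarith
  have z1: "a * Fc - b * Fs = 0"
  proof (rule zero_lim)
    fix W :: real assume W: "W > 0"
    have "a * Fc - b * Fs = (a * Cf W - b * Sf W) - a * (Cf W - Fc) + b * (Sf W - Fs)" by (simp add: algebra_simps)
    then have "\<bar>a * Fc - b * Fs\<bar> \<le> \<bar>a * Cf W - b * Sf W\<bar> + \<bar>a * (Cf W - Fc)\<bar> + \<bar>b * (Sf W - Fs)\<bar>"
      by arith
    then have "\<bar>a * Fc - b * Fs\<bar> \<le> \<bar>a * Cf W - b * Sf W\<bar> + \<bar>a\<bar> * \<bar>Cf W - Fc\<bar> + \<bar>b\<bar> * \<bar>Sf W - Fs\<bar>"
      by (simp add: abs_mult)
    also have "\<dots> \<le> B / W * T + \<bar>a\<bar> * (T / W) + \<bar>b\<bar> * (T / W)"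
      by (intro add_mono b1[OF W] mult_left_mono Fc'[OF W] Fs'[OF W]) auto
    also have "\<dots> = (B * T + \<bar>a\<bar> * T + \<bar>b\<bar> * T) / W" by (simp add: add_divide_distrib)
    finally show "\<bar>a * Fc - b * Fs\<bar> \<le> (B * T + \<bar>a\<bar> * T + \<bar>b\<bar> * T) / W" .
  qed
  have z2: "a * Fs + b * Fc = 0"
  proof (rule zero_lim)
    fix W :: real assume W: "W > 0"
    have "a * Fs + b * Fc = (a * Sf W + b * Cf W) - a * (Sf W - Fs) - b * (Cf W - Fc)" by (simp add: algebra_simps)
    then have "\<bar>a * Fs + b * Fc\<bar> \<le> \<bar>a * Sf W + b * Cf W\<bar> + \<bar>a * (Sf W - Fs)\<bar> + \<bar>b * (Cf W - Fc)\<bar>"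
      by arith
    then have "\<bar>a * Fs + b * Fc\<bar> \<le> \<bar>a * Sf W + b * Cf W\<bar> + \<bar>a\<bar> * \<bar>Sf W - Fs\<bar> + \<bar>b\<bar> * \<bar>Cf W - Fc\<bar>"
      by (simp add: abs_mult)
    also have "\<dots> \<le> B / W * T + \<bar>a\<bar> * (T / W) + \<bar>b\<bar> * (T / W)"
      by (intro add_mono b2[OF W] mult_left_mono Fc'[OF W] Fs'[OF W]) auto
    also have "\<dots> = (B * T + \<bar>a\<bar> * T + \<bar>b\<bar> * T) / W" by (simp add: add_divide_distrib)
    finally show "\<bar>a * Fs + b * Fc\<bar> \<le> (B * T + \<bar>a\<bar> * T + \<bar>b\<bar> * T) / W" .
  qed
  have D: "Fc\<^sup>2 + Fs\<^sup>2 > 0" using \<open>Fs > 0\<close> by (simp add: add_nonneg_pos)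
  have "a * (Fc\<^sup>2 + Fs\<^sup>2) = Fc * (a * Fc - b * Fs) + Fs * (a * Fs + b * Fc)"
    by (simp add: algebra_simps power2_eq_square)
  then have "a = 0" using z1 z2 D \<open>Fs > 0\<close> by simp
  have "b * (Fc\<^sup>2 + Fs\<^sup>2) = - Fs * (a * Fc - b * Fs) + Fc * (a * Fs + b * Fc)"
    by (simp add: algebra_simps power2_eq_square)
  then have "b = 0" using z1 z2 D \<open>Fs > 0\<close> by simp
  show "integral {0..T} (\<lambda>x. cos (real k * (2*pi/T) * x) * p x) = 0"
    using \<open>a = 0\<close> unfolding a_def \<omega>_def .
  show "integral {0..T} (\<lambda>x. sin (real k * (2*pi/T) * x) * p x) = 0"
    using \<open>b = 0\<close> unfolding b_def \<omega>_def .
qed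


lemma periodic_mono_const:
  fixes h :: "real \<Rightarrow> real" and T :: real
  assumes T: "T > 0" and hc: "continuous_on UNIV h" and per: "\<And>x. h (x + T) = h x"
    and mono: "\<And>X Y. 0 \<le> X \<Longrightarrow> X \<le> Y \<Longrightarrow>
       integral {0..sqrt X} (\<lambda>w. h (X - w\<^sup>2)) \<le> integral {0..sqrt Y} (\<lambda>w. h (Y - w\<^sup>2))"
  shows "h x = h 0"
proof -
  define m where "m = integral {0..T} h / T"
  define p where "p x = h x - m" for x
  have pc: "continuous_on UNIV p" unfolding p_def by (intro continuous_intros hc)
  have pper: "p (x + T) = p x" for x unfolding p_def using per by simp
  have hint: "h integrable_on {0..T}"
    by (intro integrable_continuous_interval continuous_on_subset[OF hc]) auto
  have mz: "integral {0..T} p = 0"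
  proof -
    have "integral {0..T} p = integral {0..T} h - integral {0..T} (\<lambda>x. m)"
      unfolding p_def by (rule integral_diff[OF hint]) (intro integrable_continuous_interval continuous_intros)
    also have "\<dots> = 0" using T by (simp add: m_def)
    finally show ?thesis .
  qed
  obtain M where M0: "M \<ge> 0" and M: "\<And>x. \<bar>p x\<bar> \<le> M" using per_bound[OF T pc pper] by blast
  define B where "B = T * M"
  have B0: "B \<ge> 0" using T M0 by (simp add: B_def)
  have Bb: "a \<le> t \<Longrightarrow> \<bar>integral {a..t} p\<bar> \<le> B" for a t
    unfolding B_def by (rule mean_zero_bound[OF T pc pper mz M])
  define R where "R W y = integral {0..W} (\<lambda>w. p (y - w\<^sup>2))" for W y
  have "\<forall>y. \<exists>L. \<forall>W>0. \<bar>R W y - L\<bar> \<le> B / W"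
  proof
    fix y
    obtain L where "\<And>W. W > 0 \<Longrightarrow> \<bar>integral {0..W} (\<lambda>w. p (y - w\<^sup>2)) - L\<bar> \<le> B / W"
      using fresnel_limit[OF pc Bb] by blast
    then show "\<exists>L. \<forall>W>0. \<bar>R W y - L\<bar> \<le> B / W" unfolding R_def by blast
  qed
  then obtain Ri where Ri: "\<And>y W. W > 0 \<Longrightarrow> \<bar>R W y - Ri y\<bar> \<le> B / W" by metis
  have pint: "(\<lambda>w. p (y - w\<^sup>2)) integrable_on {u..v}" for y u v
    by (intro integrable_continuous_interval continuous_on_compose2[OF pc] continuous_intros) auto
  have Psi: "integral {0..sqrt (y + real N * T)} (\<lambda>w. h (y + real N * T - w\<^sup>2))
      = m * sqrt (y + real N * T) + R (sqrt (y + real N * T)) y" if y: "y \<ge> 0" for y N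
  proof -
    define X where "X = y + real N * T"
    have X0: "X \<ge> 0" using y T unfolding X_def by simp
    have "h (X - w\<^sup>2) = m + p (y - w\<^sup>2)" for w
    proof -
      have "h (X - w\<^sup>2) = h (y - w\<^sup>2 + of_int (int N) * T)" unfolding X_def by (simp add: algebra_simps)
      also have "\<dots> = h (y - w\<^sup>2)" by (rule per_int[of h T, OF per])
      finally show ?thesis unfolding p_def by simp
    qed
    then have "integral {0..sqrt X} (\<lambda>w. h (X - w\<^sup>2)) = integral {0..sqrt X} (\<lambda>w. m + p (y - w\<^sup>2))" by simp
    also have "\<dots> = integral {0..sqrt X} (\<lambda>w. m) + R (sqrt X) y"
      unfolding R_def by (rule integral_add) (auto intro: pint integrable_continuous_interval continuous_intros)
    also have "integral {0..sqrt X} (\<lambda>w. m) = m * sqrt X" using X0 by simp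
    finally show ?thesis unfolding X_def .
  qed
  have Rimono: "Ri y \<le> Ri y'" if yy: "0 \<le> y" "y \<le> y'" "y' \<le> T" for y y'
  proof (rule le_lim[OF T])
    fix N :: nat assume N: "N \<ge> 1"
    define X where "X = y + real N * T"
    define X' where "X' = y' + real N * T"
    define s where "s = sqrt X"
    define s' where "s' = sqrt X'"
    have NT: "real N * T > 0" using N T by simp
    have sNT: "sqrt (real N * T) > 0" using NT by simp
    have ss: "s \<ge> sqrt (real N * T)" unfolding s_def X_def using yy by simp
    have ss': "s' \<ge> s" unfolding s_def s'_def X_def X'_def using yy by simp
    have sp: "s > 0" using ss sNT by linarith
    have mono1: "m * s + R s y \<le> m * s' + R s' y'"
      using mono[of X X'] Psi[of y N] Psi[of y' N] yy T unfolding s_def s'_def X_def X'_def by simp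
    have diff: "s' - s \<le> T / s"
    proof -
      have "(s' - s) * s \<le> (s' - s) * (s' + s)" using ss' sp by (intro mult_left_mono) auto
      also have "\<dots> = s'\<^sup>2 - s\<^sup>2" by (simp add: algebra_simps power2_eq_square)
      also have "\<dots> = X' - X" unfolding s_def s'_def X_def X'_def using yy T by simp
      also have "\<dots> \<le> T" unfolding X_def X'_def using yy by simp
      finally show ?thesis using sp by (simp add: pos_le_divide_eq)
    qed
    have "T / s \<le> T / sqrt (real N * T)" using ss sNT T sp by (intro divide_left_mono) (auto intro: mult_pos_pos)
    with diff have d2: "s' - s \<le> T / sqrt (real N * T)" by simp
    have "m * (s' - s) \<le> \<bar>m\<bar> * (s' - s)" using ss' by (intro mult_right_mono) auto
    also have "\<dots> \<le> \<bar>m\<bar> * (T / sqrt (real N * T))" using d2 by (intro mult_left_mono) auto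
    finally have d3: "m * (s' - s) \<le> \<bar>m\<bar> * T / sqrt (real N * T)" by simp
    have r1: "Ri y \<le> R s y + B / s" using Ri[OF sp, of y] by linarith
    have r2: "R s' y' \<le> Ri y' + B / s'" using Ri[of s' y'] sp ss' by fastforce
    have b1: "B / s \<le> B / sqrt (real N * T)" using ss sNT B0 sp by (intro divide_left_mono) (auto intro: mult_pos_pos)
    have b2: "B / s' \<le> B / sqrt (real N * T)" using ss ss' sNT B0 sp by (intro divide_left_mono) (auto intro: mult_pos_pos)
    have "Ri y \<le> Ri y' + (B / sqrt (real N * T) + B / sqrt (real N * T) + \<bar>m\<bar> * T / sqrt (real N * T))"
    proof -
      have d4: "m * s' - m * s \<le> \<bar>m\<bar> * T / sqrt (real N * T)" using d3 by (simp add: algebra_simps)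
      show ?thesis using r1 r2 b1 b2 d4 mono1 by linarith
    qed
    also have "B / sqrt (real N * T) + B / sqrt (real N * T) + \<bar>m\<bar> * T / sqrt (real N * T)
        = (2 * B + \<bar>m\<bar> * T) / sqrt (real N * T)" by (simp add: add_divide_distrib)
    finally show "Ri y \<le> Ri y' + (2 * B + \<bar>m\<bar> * T) / sqrt (real N * T)" .
  qed
  have RiT: "Ri T = Ri 0"
  proof -
    have "R W T = R W 0" for W
    proof -
      have "p (T - w\<^sup>2) = p (0 - w\<^sup>2)" for w using pper[of "0 - w\<^sup>2"] by (simp add: algebra_simps)
      then show ?thesis unfolding R_def by simp
    qed
    then have "\<bar>Ri T - Ri 0\<bar> \<le> (2 * B) / W" if "W > 0" for W
      using Ri[OF that, of T] Ri[OF that, of 0] by (simp add: abs_le_iff)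
    then show ?thesis using zero_lim[of "Ri T - Ri 0" "2 * B"] by simp
  qed
  have Rconst: "Ri y = Ri 0" if "y \<in> {0..T}" for y
    using Rimono[of 0 y] Rimono[of y T] RiT that by auto
  have Rc: "\<bar>integral {0..W} (\<lambda>w. p (y - w\<^sup>2)) - Ri 0\<bar> \<le> B / W" if "W > 0" "y \<in> {0..T}" for W y
    using Ri[OF that(1), of y] Rconst[OF that(2)] unfolding R_def by simp
  have coeffs: "integral {0..T} (\<lambda>x. cos (real k * (2*pi/T) * x) * p x) = 0 \<and>
      integral {0..T} (\<lambda>x. sin (real k * (2*pi/T) * x) * p x) = 0" for k
  proof (cases "k = 0")
    case True then show ?thesis using mz by simp
  next
    case False then have "k \<ge> 1" by simp
    then show ?thesis using coeff_zero[OF T pc pper B0 Rc] by blast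
  qed
  have "p z = 0" for z
    by (rule fourier_unique[OF T pc pper]) (use coeffs in auto)
  then show ?thesis unfolding p_def by (metis eq_iff_diff_eq_0)
qed


definition cc :: "nat \<Rightarrow> real" where "cc n = integral {0..pi/2} (\<lambda>s. (sin s) ^ (2*n))"
definition DD :: "nat \<Rightarrow> real \<Rightarrow> real" where "DD n X = integral {0..sqrt X} (\<lambda>w. (X - w\<^sup>2) ^ n)"

lemma cc_rec: "(2 * real n + 2) * cc (Suc n) = (2 * real n + 1) * cc n"
proof -
  define F where "F s = - cos s * (sin s) ^ (2*n+1)" for s :: real
  have "((\<lambda>s. (2 * real n + 2) * (sin s) ^ (2*(Suc n)) - (2 * real n + 1) * (sin s) ^ (2*n)) has_integral (F (pi/2) - F 0)) {0..pi/2}"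
  proof (rule fundamental_theorem_of_calculus)
    show "0 \<le> pi/2" by simp
    fix s assume "s \<in> {0..pi/2}"
    have "(F has_real_derivative (sin s * (sin s) ^ (2*n+1) - cos s * (real (2*n+1) * (sin s) ^ (2*n) * cos s))) (at s within {0..pi/2})"
      unfolding F_def by (auto intro!: derivative_eq_intros simp del: power_Suc)
    moreover have "sin s * (sin s) ^ (2*n+1) - cos s * (real (2*n+1) * (sin s) ^ (2*n) * cos s)
        = (2 * real n + 2) * (sin s) ^ (2*(Suc n)) - (2 * real n + 1) * (sin s) ^ (2*n)"
    proof -
      have c2: "(cos s)\<^sup>2 = 1 - (sin s)\<^sup>2" by (simp add: cos_squared_eq)
      have e1: "2*(Suc n) = Suc (2*n+1)" by simp
      have "sin s * (sin s) ^ (2*n+1) = (sin s) ^ (2*(Suc n))" by (simp only: e1 power_Suc)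
      moreover have "cos s * (real (2*n+1) * (sin s) ^ (2*n) * cos s) = real (2*n+1) * (sin s) ^ (2*n) * (cos s)\<^sup>2"
        by (simp add: power2_eq_square algebra_simps)
      moreover have "(sin s) ^ (2*(Suc n)) = (sin s) ^ (2*n) * (sin s)\<^sup>2"
      proof -
        have e2: "2*(Suc n) = 2*n + 2" by simp
        show ?thesis by (simp only: e2 power_add)
      qed
      ultimately have f: "sin s * (sin s) ^ (2*n+1) = (sin s) ^ (2*n) * (sin s)\<^sup>2"
          "cos s * (real (2*n+1) * (sin s) ^ (2*n) * cos s) = real (2*n+1) * (sin s) ^ (2*n) * (1 - (sin s)\<^sup>2)"
          "(sin s) ^ (2*(Suc n)) = (sin s) ^ (2*n) * (sin s)\<^sup>2"
        unfolding c2 by simp_all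
      have g: "A * Q - real (2*n+1) * A * (1 - Q) = (2 * real n + 2) * (A * Q) - (2 * real n + 1) * A" for A Q :: real
        by (simp add: algebra_simps)
      show ?thesis unfolding f by (rule g)
    qed
    ultimately show "(F has_vector_derivative ((2 * real n + 2) * (sin s) ^ (2*(Suc n)) - (2 * real n + 1) * (sin s) ^ (2*n))) (at s within {0..pi/2})"
      by (simp add: has_real_derivative_iff_has_vector_derivative)
  qed
  moreover have "F (pi/2) - F 0 = 0" unfolding F_def by simp
  ultimately have "integral {0..pi/2} (\<lambda>s. (2 * real n + 2) * (sin s) ^ (2*(Suc n)) - (2 * real n + 1) * (sin s) ^ (2*n)) = 0"
    by (simp add: integral_unique)
  moreover have "integral {0..pi/2} (\<lambda>s. (2 * real n + 2) * (sin s) ^ (2*(Suc n)) - (2 * real n + 1) * (sin s) ^ (2*n))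
      = (2 * real n + 2) * cc (Suc n) - (2 * real n + 1) * cc n"
    unfolding cc_def
    by (subst integral_diff) (auto intro!: integrable_continuous_interval continuous_intros)
  ultimately show ?thesis by simp
qed

lemma DD_rec: assumes X: "X \<ge> 0" shows "(2 * real n + 3) * DD (Suc n) X = (2 * real n + 2) * X * DD n X"
proof -
  define G where "G w = w * (X - w\<^sup>2) ^ (Suc n)" for w :: real
  have "((\<lambda>w. (2 * real n + 3) * (X - w\<^sup>2) ^ (Suc n) - (2 * real n + 2) * X * (X - w\<^sup>2) ^ n) has_integral (G (sqrt X) - G 0)) {0..sqrt X}"
  proof (rule fundamental_theorem_of_calculus)
    show "0 \<le> sqrt X" using X by simp
    fix w assume "w \<in> {0..sqrt X}"
    have "(G has_real_derivative ((X - w\<^sup>2) ^ (Suc n) + w * (real (Suc n) * (X - w\<^sup>2) ^ n * (- (2 * w))))) (at w within {0..sqrt X})"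
      unfolding G_def by (auto intro!: derivative_eq_intros simp del: power_Suc)
    moreover have "(X - w\<^sup>2) ^ (Suc n) + w * (real (Suc n) * (X - w\<^sup>2) ^ n * (- (2 * w)))
        = (2 * real n + 3) * (X - w\<^sup>2) ^ (Suc n) - (2 * real n + 2) * X * (X - w\<^sup>2) ^ n"
    proof -
      have "w * (real (Suc n) * (X - w\<^sup>2) ^ n * (- (2 * w))) = (2 * real n + 2) * (X - w\<^sup>2) ^ n * ((X - w\<^sup>2) - X)"
        by (simp add: power2_eq_square algebra_simps)
      also have "\<dots> = (2 * real n + 2) * (X - w\<^sup>2) ^ (Suc n) - (2 * real n + 2) * X * (X - w\<^sup>2) ^ n"
        by (simp add: algebra_simps)
      finally show ?thesis by (simp add: algebra_simps)
    qed
    ultimately show "(G has_vector_derivative ((2 * real n + 3) * (X - w\<^sup>2) ^ (Suc n) - (2 * real n + 2) * X * (X - w\<^sup>2) ^ n)) (at w within {0..sqrt X})"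
      by (simp add: has_real_derivative_iff_has_vector_derivative)
  qed
  moreover have "G (sqrt X) - G 0 = 0" unfolding G_def using X by simp
  ultimately have "integral {0..sqrt X} (\<lambda>w. (2 * real n + 3) * (X - w\<^sup>2) ^ (Suc n) - (2 * real n + 2) * X * (X - w\<^sup>2) ^ n) = 0"
    by (simp add: integral_unique)
  moreover have "integral {0..sqrt X} (\<lambda>w. (2 * real n + 3) * (X - w\<^sup>2) ^ (Suc n) - (2 * real n + 2) * X * (X - w\<^sup>2) ^ n)
      = (2 * real n + 3) * DD (Suc n) X - (2 * real n + 2) * X * DD n X"
    unfolding DD_def
    by (subst integral_diff) (auto intro!: integrable_continuous_interval continuous_intros)
  ultimately show ?thesis by simp
qed

lemma cc0: "cc 0 = pi/2" unfolding cc_def by simp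
lemma DD0: "X \<ge> 0 \<Longrightarrow> DD 0 X = sqrt X" unfolding DD_def by simp

lemma cancel_aux: "(u::real) \<noteq> 0 \<Longrightarrow> v \<noteq> 0 \<Longrightarrow> u / v * X * (K / u) = X * K / v"
  by (simp add: field_simps)

lemma ccDD: assumes X: "X \<ge> 0" shows "cc n * DD n X = pi/2 * X^n * sqrt X / (2 * real n + 1)"
proof (induction n)
  case 0 then show ?case using X by (simp add: cc0 DD0)
next
  case (Suc n)
  have a: "cc (Suc n) = (2 * real n + 1) / (2 * real n + 2) * cc n"
    using cc_rec[of n] by (simp add: field_simps)
  have b: "DD (Suc n) X = (2 * real n + 2) / (2 * real n + 3) * X * DD n X"
    using DD_rec[OF X, of n] by (simp add: field_simps)
  have ne: "2 * real n + 2 \<noteq> 0" by (simp add: add_nonneg_pos)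
  have q: "(2 * real n + 1) / (2 * real n + 2) * ((2 * real n + 2) / (2 * real n + 3)) = (2 * real n + 1) / (2 * real n + 3)"
    using ne by simp
  have "cc (Suc n) * DD (Suc n) X = ((2 * real n + 1) / (2 * real n + 2) * ((2 * real n + 2) / (2 * real n + 3))) * X * (cc n * DD n X)"
    unfolding a b by (simp only: mult.assoc mult.commute mult.left_commute)
  also have "\<dots> = (2 * real n + 1) / (2 * real n + 3) * X * (cc n * DD n X)" unfolding q ..
  finally have "cc (Suc n) * DD (Suc n) X = (2 * real n + 1) / (2 * real n + 3) * X * (cc n * DD n X)" .
  also have "\<dots> = (2 * real n + 1) / (2 * real n + 3) * X * (pi/2 * X^n * sqrt X / (2 * real n + 1))"
    using Suc by simp
  also have "\<dots> = pi/2 * X^(Suc n) * sqrt X / (2 * real (Suc n) + 1)"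
  proof -
    have p1: "2 * real n + 1 \<noteq> 0" "2 * real n + 3 \<noteq> 0" by (simp_all add: add_nonneg_pos)
    have e: "2 * real (Suc n) + 1 = 2 * real n + 3" by simp
    have "(2 * real n + 1) / (2 * real n + 3) * X * (pi/2 * X^n * sqrt X / (2 * real n + 1))
       = X * (pi/2 * X^n * sqrt X) / (2 * real n + 3)" using cancel_aux[OF p1] .
    also have "\<dots> = pi/2 * X^(Suc n) * sqrt X / (2 * real n + 3)" by (simp add: mult_ac)
    finally show ?thesis unfolding e .
  qed
  finally show ?case .
qed


lemma A_op_mono: "A_op (\<lambda>t. t^n) \<theta> = \<theta>^n * cc n"
proof -
  have "(\<theta> * (sin s)\<^sup>2) ^ n = \<theta>^n * (sin s) ^ (2*n)" for s
    by (simp add: power_mult_distrib power_mult[symmetric] mult.commute)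
  then show ?thesis unfolding A_op_def cc_def by simp
qed

lemma psi_mono:
  assumes X: "X \<ge> 0"
  shows "integral {0..sqrt X} (\<lambda>w. A_op (\<lambda>t. t^n) (X - w\<^sup>2)) = pi/2 * integral {0..sqrt X} (\<lambda>z. (z\<^sup>2)^n)"
proof -
  have "integral {0..sqrt X} (\<lambda>w. A_op (\<lambda>t. t^n) (X - w\<^sup>2)) = integral {0..sqrt X} (\<lambda>w. cc n * (X - w\<^sup>2)^n)"
    by (simp add: A_op_mono mult.commute)
  also have "\<dots> = cc n * DD n X" unfolding DD_def by simp
  also have "\<dots> = pi/2 * X^n * sqrt X / (2 * real n + 1)" by (rule ccDD[OF X])
  finally have l: "integral {0..sqrt X} (\<lambda>w. A_op (\<lambda>t. t^n) (X - w\<^sup>2)) = pi/2 * X^n * sqrt X / (2 * real n + 1)" .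
  have "((\<lambda>z. z^(2*n)) has_integral (sqrt X ^ (2*n+1) / real (2*n+1) - 0 ^ (2*n+1) / real (2*n+1))) {0..sqrt X}"
  proof (rule fundamental_theorem_of_calculus)
    show "0 \<le> sqrt X" using X by simp
    fix z assume "z \<in> {0..sqrt X}"
    have "((\<lambda>z. z ^ (2*n+1)) has_real_derivative (real (2*n+1) * z ^ (2*n+1 - Suc 0))) (at z within {0..sqrt X})"
      by (rule DERIV_pow)
    then have "((\<lambda>z. z ^ (2*n+1) / real (2*n+1)) has_real_derivative (real (2*n+1) * z ^ (2*n+1 - Suc 0)) / real (2*n+1)) (at z within {0..sqrt X})"
      by (rule DERIV_cdivide)
    moreover have "(real (2*n+1) * z ^ (2*n+1 - Suc 0)) / real (2*n+1) = z^(2*n)"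
      by (simp del: of_nat_add of_nat_mult)
    ultimately show "((\<lambda>z. z ^ (2*n+1) / real (2*n+1)) has_vector_derivative z^(2*n)) (at z within {0..sqrt X})"
      by (simp add: has_real_derivative_iff_has_vector_derivative)
  qed
  then have "integral {0..sqrt X} (\<lambda>z. z^(2*n)) = sqrt X ^ (2*n+1) / real (2*n+1)"
    by (simp add: integral_unique)
  moreover have "sqrt X ^ (2*n+1) = X^n * sqrt X"
  proof -
    have "sqrt X ^ (2*n) = X^n" using X by (simp add: power_mult)
    then show ?thesis by simp
  qed
  moreover have "(\<lambda>z. (z\<^sup>2)^n) = (\<lambda>z::real. z^(2*n))" by (simp add: power_mult[symmetric])
  ultimately have r: "integral {0..sqrt X} (\<lambda>z. (z\<^sup>2)^n) = X^n * sqrt X / (2 * real n + 1)"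
    by (simp add: add.commute)
  show ?thesis unfolding l r by simp
qed

lemma psi_poly:
  assumes X: "X \<ge> 0"
  shows "integral {0..sqrt X} (\<lambda>w. A_op (\<lambda>x. \<Sum>i\<le>N. a i * x^i) (X - w\<^sup>2))
       = pi/2 * integral {0..sqrt X} (\<lambda>z. \<Sum>i\<le>N. a i * (z\<^sup>2)^i)"
proof -
  have Alin: "A_op (\<lambda>x. \<Sum>i\<le>N. a i * x^i) \<theta> = (\<Sum>i\<le>N. a i * A_op (\<lambda>t. t^i) \<theta>)" for \<theta>
  proof -
    have "A_op (\<lambda>x. \<Sum>i\<le>N. a i * x^i) \<theta> = (\<Sum>i\<le>N. integral {0..pi/2} (\<lambda>s. a i * (\<theta> * (sin s)\<^sup>2)^i))"
      unfolding A_op_def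
      by (rule integral_sum) (auto intro!: integrable_continuous_interval continuous_intros)
    then show ?thesis unfolding A_op_def by simp
  qed
  have "integral {0..sqrt X} (\<lambda>w. A_op (\<lambda>x. \<Sum>i\<le>N. a i * x^i) (X - w\<^sup>2))
      = integral {0..sqrt X} (\<lambda>w. \<Sum>i\<le>N. a i * A_op (\<lambda>t. t^i) (X - w\<^sup>2))" by (simp add: Alin)
  also have "\<dots> = (\<Sum>i\<le>N. integral {0..sqrt X} (\<lambda>w. a i * A_op (\<lambda>t. t^i) (X - w\<^sup>2)))"
    by (rule integral_sum) (auto simp: A_op_mono intro!: integrable_continuous_interval continuous_intros)
  also have "\<dots> = (\<Sum>i\<le>N. a i * integral {0..sqrt X} (\<lambda>w. A_op (\<lambda>t. t^i) (X - w\<^sup>2)))"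
    by simp
  also have "\<dots> = (\<Sum>i\<le>N. a i * (pi/2 * integral {0..sqrt X} (\<lambda>z. (z\<^sup>2)^i)))"
    by (simp only: psi_mono[OF X])
  also have "\<dots> = pi/2 * (\<Sum>i\<le>N. integral {0..sqrt X} (\<lambda>z. a i * (z\<^sup>2)^i))"
    by (simp add: sum_distrib_left mult_ac)
  also have "(\<Sum>i\<le>N. integral {0..sqrt X} (\<lambda>z. a i * (z\<^sup>2)^i)) = integral {0..sqrt X} (\<lambda>z. \<Sum>i\<le>N. a i * (z\<^sup>2)^i)"
    by (rule integral_sum[symmetric]) (auto intro!: integrable_continuous_interval continuous_intros)
  finally show ?thesis .
qed

lemma A_op_cont:
  assumes fc: "continuous_on {0..X} f" and X: "X \<ge> 0"
  shows "continuous_on {0..X} (A_op f)"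
proof -
  have "continuous_on ({0..X} \<times> cbox 0 (pi/2)) (\<lambda>(\<theta>, s). f (\<theta> * (sin s)\<^sup>2))"
  proof -
    have eq: "(\<lambda>(\<theta>, s). f (\<theta> * (sin s)\<^sup>2)) = (\<lambda>z::real\<times>real. f (fst z * (sin (snd z))\<^sup>2))"
      by (auto simp: fun_eq_iff)
    have "continuous_on ({0..X} \<times> cbox 0 (pi/2)) (\<lambda>z::real\<times>real. f (fst z * (sin (snd z))\<^sup>2))"
    proof (rule continuous_on_compose2[OF fc])
      show "continuous_on ({0..X} \<times> cbox 0 (pi / 2)) (\<lambda>z::real\<times>real. fst z * (sin (snd z))\<^sup>2)"
        by (intro continuous_intros)
      show "(\<lambda>z::real\<times>real. fst z * (sin (snd z))\<^sup>2) ` ({0..X} \<times> cbox 0 (pi / 2)) \<subseteq> {0..X}"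
      proof clarify
        fix \<theta> s :: real assume "\<theta> \<in> {0..X}"
        moreover have "(sin s)\<^sup>2 \<le> 1" using abs_sin_le_one[of s] by (simp add: abs_square_le_1)
        ultimately have "\<theta> * (sin s)\<^sup>2 \<le> \<theta>" "0 \<le> \<theta>" "\<theta> \<le> X"
          by (auto intro!: mult_right_le_one_le)
        then show "fst (\<theta>, s) * (sin (snd (\<theta>, s)))\<^sup>2 \<in> {0..X}" by simp
      qed
    qed
    then show ?thesis unfolding eq .
  qed
  from integral_continuous_on_param[OF this] show ?thesis unfolding A_op_def by simp
qed


lemma sin2_range: "(\<theta>::real) \<in> {0..X} \<Longrightarrow> \<theta> * (sin s)\<^sup>2 \<in> {0..X}"
proof -
  assume t: "\<theta> \<in> {0..X}"
  have "(sin s)\<^sup>2 \<le> 1" using abs_sin_le_one[of s] by (simp add: abs_square_le_1)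
  then have "\<theta> * (sin s)\<^sup>2 \<le> \<theta>" using t by (auto intro!: mult_right_le_one_le)
  then show ?thesis using t by auto
qed

lemma A_op_diff_bound:
  assumes fc: "continuous_on {0..X} f" and gc: "continuous_on {0..X} g"
    and close: "\<And>x. x \<in> {0..X} \<Longrightarrow> \<bar>f x - g x\<bar> \<le> e" and t: "\<theta> \<in> {0..X}"
  shows "\<bar>A_op f \<theta> - A_op g \<theta>\<bar> \<le> e * (pi/2)"
proof -
  have c: "continuous_on {0..pi/2} (\<lambda>s. h (\<theta> * (sin s)\<^sup>2))" if hc: "continuous_on {0..X} h" for h
    by (rule continuous_on_compose2[OF hc]) (auto intro!: continuous_intros sin2_range[OF t])
  have "A_op f \<theta> - A_op g \<theta> = integral {0..pi/2} (\<lambda>s. f (\<theta> * (sin s)\<^sup>2) - g (\<theta> * (sin s)\<^sup>2))"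
    unfolding A_op_def
    by (rule integral_diff[symmetric]) (auto intro!: integrable_continuous_interval c fc gc)
  also have "norm \<dots> \<le> e * (pi/2 - 0)"
  proof (rule integral_bound)
    show "0 \<le> pi/2" by simp
    show "continuous_on {0..pi/2} (\<lambda>s. f (\<theta> * (sin s)\<^sup>2) - g (\<theta> * (sin s)\<^sup>2))"
      by (intro continuous_intros c fc gc)
    fix s assume "s \<in> {0..pi/2}"
    show "norm (f (\<theta> * (sin s)\<^sup>2) - g (\<theta> * (sin s)\<^sup>2)) \<le> e"
      using close[OF sin2_range[OF t]] by simp
  qed
  finally show ?thesis by simp
qed

lemma psi_identity:
  assumes X: "X \<ge> 0" and fc: "continuous_on {0..X} f"
  shows "integral {0..sqrt X} (\<lambda>w. A_op f (X - w\<^sup>2)) = pi/2 * integral {0..sqrt X} (\<lambda>z. f (z\<^sup>2))"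
proof -
  define L where "L g = integral {0..sqrt X} (\<lambda>w. A_op g (X - w\<^sup>2)) - pi/2 * integral {0..sqrt X} (\<lambda>z. g (z\<^sup>2))" for g
  have wr: "X - w\<^sup>2 \<in> {0..X}" if "w \<in> {0..sqrt X}" for w
  proof -
    have "w\<^sup>2 \<le> (sqrt X)\<^sup>2" using that by (auto intro!: power_mono)
    then show ?thesis using X by auto
  qed
  have zr: "z\<^sup>2 \<in> {0..X}" if "z \<in> {0..sqrt X}" for z
  proof -
    have "z\<^sup>2 \<le> (sqrt X)\<^sup>2" using that by (auto intro!: power_mono)
    then show ?thesis using X by auto
  qed
  have bound: "\<bar>L f\<bar> \<le> pi * sqrt X * e" if e: "e > 0" for e
  proof -
    obtain g where g: "real_polynomial_function g" "\<And>x. x \<in> {0..X} \<Longrightarrow> \<bar>f x - g x\<bar> < e"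
      using Stone_Weierstrass_real_polynomial_function[OF compact_Icc fc e] by blast
    obtain a N where gs: "g = (\<lambda>x. \<Sum>i\<le>N. a i * x^i)"
      using g(1) real_polynomial_function_iff_sum by blast
    have Lg: "L g = 0" unfolding L_def gs using psi_poly[OF X] by simp
    have gc: "continuous_on {0..X} g"
      using continuous_real_polymonial_function[OF g(1)] by (auto intro: continuous_at_imp_continuous_on)
    have close: "\<And>x. x \<in> {0..X} \<Longrightarrow> \<bar>f x - g x\<bar> \<le> e" using g(2) by (simp add: less_imp_le)
    have Af: "continuous_on {0..sqrt X} (\<lambda>w. A_op h (X - w\<^sup>2))" if hc: "continuous_on {0..X} h" for h
      by (rule continuous_on_compose2[OF A_op_cont[OF hc X]]) (auto intro!: continuous_intros wr)
    have Zf: "continuous_on {0..sqrt X} (\<lambda>z. h (z\<^sup>2))" if hc: "continuous_on {0..X} h" for h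
      by (rule continuous_on_compose2[OF hc]) (auto intro!: continuous_intros zr)
    have d1: "\<bar>integral {0..sqrt X} (\<lambda>w. A_op f (X - w\<^sup>2)) - integral {0..sqrt X} (\<lambda>w. A_op g (X - w\<^sup>2))\<bar> \<le> e * (pi/2) * sqrt X"
    proof -
      have "integral {0..sqrt X} (\<lambda>w. A_op f (X - w\<^sup>2)) - integral {0..sqrt X} (\<lambda>w. A_op g (X - w\<^sup>2))
          = integral {0..sqrt X} (\<lambda>w. A_op f (X - w\<^sup>2) - A_op g (X - w\<^sup>2))"
        by (rule integral_diff[symmetric]) (auto intro!: integrable_continuous_interval Af fc gc)
      also have "norm \<dots> \<le> e * (pi/2) * (sqrt X - 0)"
      proof (rule integral_bound)
        show "0 \<le> sqrt X" using X by simp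
        show "continuous_on {0..sqrt X} (\<lambda>w. A_op f (X - w\<^sup>2) - A_op g (X - w\<^sup>2))"
          by (intro continuous_intros Af fc gc)
        fix w assume "w \<in> {0..sqrt X}"
        then show "norm (A_op f (X - w\<^sup>2) - A_op g (X - w\<^sup>2)) \<le> e * (pi/2)"
          using A_op_diff_bound[OF fc gc close wr] by simp
      qed
      finally show ?thesis by simp
    qed
    have d2: "\<bar>integral {0..sqrt X} (\<lambda>z. f (z\<^sup>2)) - integral {0..sqrt X} (\<lambda>z. g (z\<^sup>2))\<bar> \<le> e * sqrt X"
    proof -
      have "integral {0..sqrt X} (\<lambda>z. f (z\<^sup>2)) - integral {0..sqrt X} (\<lambda>z. g (z\<^sup>2))
          = integral {0..sqrt X} (\<lambda>z. f (z\<^sup>2) - g (z\<^sup>2))"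
        by (rule integral_diff[symmetric]) (auto intro!: integrable_continuous_interval Zf fc gc)
      also have "norm \<dots> \<le> e * (sqrt X - 0)"
      proof (rule integral_bound)
        show "0 \<le> sqrt X" using X by simp
        show "continuous_on {0..sqrt X} (\<lambda>z. f (z\<^sup>2) - g (z\<^sup>2))"
          by (intro continuous_intros Zf fc gc)
        fix z assume "z \<in> {0..sqrt X}"
        then show "norm (f (z\<^sup>2) - g (z\<^sup>2)) \<le> e"
          using close[OF zr] by simp
      qed
      finally show ?thesis by simp
    qed
    have "L f = (L f - L g)" using Lg by simp
    also have "\<dots> = (integral {0..sqrt X} (\<lambda>w. A_op f (X - w\<^sup>2)) - integral {0..sqrt X} (\<lambda>w. A_op g (X - w\<^sup>2)))
        - pi/2 * (integral {0..sqrt X} (\<lambda>z. f (z\<^sup>2)) - integral {0..sqrt X} (\<lambda>z. g (z\<^sup>2)))"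
      unfolding L_def by (simp add: algebra_simps)
    finally have eqL: "L f = (integral {0..sqrt X} (\<lambda>w. A_op f (X - w\<^sup>2)) - integral {0..sqrt X} (\<lambda>w. A_op g (X - w\<^sup>2)))
        - pi/2 * (integral {0..sqrt X} (\<lambda>z. f (z\<^sup>2)) - integral {0..sqrt X} (\<lambda>z. g (z\<^sup>2)))" .
    have "\<bar>L f\<bar> \<le> \<bar>integral {0..sqrt X} (\<lambda>w. A_op f (X - w\<^sup>2)) - integral {0..sqrt X} (\<lambda>w. A_op g (X - w\<^sup>2))\<bar>
        + \<bar>pi/2 * (integral {0..sqrt X} (\<lambda>z. f (z\<^sup>2)) - integral {0..sqrt X} (\<lambda>z. g (z\<^sup>2)))\<bar>"
      unfolding eqL by (rule abs_triangle_ineq4)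
    also have "\<dots> = \<bar>integral {0..sqrt X} (\<lambda>w. A_op f (X - w\<^sup>2)) - integral {0..sqrt X} (\<lambda>w. A_op g (X - w\<^sup>2))\<bar>
        + pi/2 * \<bar>integral {0..sqrt X} (\<lambda>z. f (z\<^sup>2)) - integral {0..sqrt X} (\<lambda>z. g (z\<^sup>2))\<bar>"
      by (simp add: abs_mult)
    also have "\<dots> \<le> e * (pi/2) * sqrt X + pi/2 * (e * sqrt X)"
      by (intro add_mono d1 mult_left_mono d2) simp
    finally have "\<bar>L f\<bar> \<le> e * (pi/2) * sqrt X + pi/2 * (e * sqrt X)" .
    then show ?thesis by (simp add: algebra_simps)
  qed
  have "L f = 0"
  proof (rule zero_lim)
    fix W :: real assume W: "W > 0"
    have "\<bar>L f\<bar> \<le> pi * sqrt X * (1 / W)" by (rule bound) (use W in simp)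
    then show "\<bar>L f\<bar> \<le> pi * sqrt X / W" by simp
  qed
  then show ?thesis unfolding L_def by simp
qed


lemma ra_cont:
  assumes ra: "real_analytic_on f S" and up: "\<And>x y. x \<in> S \<Longrightarrow> x \<le> y \<Longrightarrow> y \<in> S"
  shows "continuous_on S f"
proof (rule continuous_on_eq_continuous_within[THEN iffD2], rule ballI)
  fix x assume x: "x \<in> S"
  obtain r a where r: "r > 0" and a: "\<And>y. y \<in> S \<Longrightarrow> \<bar>y - x\<bar> < r \<Longrightarrow> (\<lambda>n. a n * (y - x) ^ n) sums f y"
    using ra x unfolding real_analytic_on_def by blast
  have "x + r/2 \<in> S" using up[OF x, of "x + r/2"] r by simp
  then have "(\<lambda>n. a n * (r/2) ^ n) sums f (x + r/2)" using a[of "x + r/2"] r by simp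
  then have sm: "summable (\<lambda>n. a n * (r/2) ^ n)" by (rule sums_summable)
  define g where "g t = (\<Sum>n. a n * t ^ n)" for t :: real
  have "isCont g 0" unfolding g_def by (rule isCont_powser[OF sm]) (use r in simp)
  then have "isCont (\<lambda>y. g (y - x)) x"
    by (intro continuous_intros isCont_o2[where f = "\<lambda>y. y - x" and g = g, unfolded o_def]) (auto intro!: continuous_intros)
  then have "continuous (at x within S) (\<lambda>y. g (y - x))" by (rule continuous_at_imp_continuous_within)
  then show "continuous (at x within S) f"
  proof (rule continuous_transform_within[where \<delta> = "r/2"])
    show "0 < r/2" using r by simp
    show "x \<in> S" by (rule x)
    fix y assume "y \<in> S" "dist y x < r/2"
    then have "(\<lambda>n. a n * (y - x) ^ n) sums f y" using a r by (simp add: dist_real_def)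
    then show "g (y - x) = f y" unfolding g_def by (simp add: sums_iff)
  qed
qed

lemma series_zero:
  fixes a :: "nat \<Rightarrow> real"
  assumes r: "r > 0" and z: "\<And>t. 0 < t \<Longrightarrow> t < r \<Longrightarrow> (\<lambda>n. a n * t ^ n) sums 0"
  shows "a k = 0"
proof (induction k rule: less_induct)
  case (less k)
  define b where "b i = a (i + k)" for i
  have bz: "(\<lambda>i. b i * t ^ i) sums 0" if t: "0 < t" "t < r" for t
  proof -
    have s0: "(\<Sum>i<k. a i * t ^ i) = 0" using less by simp
    have "(\<lambda>i. a (i + k) * t ^ (i + k)) sums 0"
      using z[OF t] sums_iff_shift[of "\<lambda>i. a i * t ^ i" k 0] s0 by simp
    then have "(\<lambda>i. (a (i + k) * t ^ (i + k)) * (1 / t ^ k)) sums (0 * (1 / t ^ k))"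
      by (rule sums_mult2)
    moreover have "(a (i + k) * t ^ (i + k)) * (1 / t ^ k) = b i * t ^ i" for i
      using t unfolding b_def by (simp add: power_add)
    ultimately show ?thesis by simp
  qed
  define G where "G t = (\<Sum>i. b i * t ^ i)" for t :: real
  have sm: "summable (\<lambda>i. b i * (r/2) ^ i)" using bz[of "r/2"] r by (auto intro: sums_summable)
  have "isCont G 0" unfolding G_def by (rule isCont_powser[OF sm]) (use r in simp)
  then have lim: "(G \<longlongrightarrow> G 0) (at_right 0)"
    by (simp add: isCont_def filterlim_at_split)
  have ev: "eventually (\<lambda>t. G t = 0) (at_right 0)"
  proof -
    have "eventually (\<lambda>t. t \<in> {0<..<r}) (at_right (0::real))" by (rule eventually_at_right_real[OF r])
    then show ?thesis
    proof eventually_elim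
      case (elim t) then show ?case using bz[of t] unfolding G_def by (simp add: sums_iff)
    qed
  qed
  have "(G \<longlongrightarrow> 0) (at_right 0)" using tendsto_eventually[OF ev] .
  then have "G 0 = 0" using lim by (intro tendsto_unique[OF _ lim]) auto
  moreover have "G 0 = b 0" unfolding G_def by simp
  ultimately show ?case unfolding b_def by simp
qed

lemma ra_identity:
  assumes ra: "real_analytic_on \<phi> S" and up: "\<And>x y. x \<in> S \<Longrightarrow> x \<le> y \<Longrightarrow> y \<in> S"
    and zb: "\<And>y. y \<in> S \<Longrightarrow> y \<ge> b \<Longrightarrow> \<phi> y = 0"
    and x0: "x0 \<in> S"
  shows "\<phi> x0 = 0"
proof (cases "x0 \<ge> b")
  case True then show ?thesis using zb x0 by simp
next
  case False
  define Z where "Z = {t \<in> {x0..b}. \<forall>y. y \<in> S \<longrightarrow> y \<ge> t \<longrightarrow> \<phi> y = 0}"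
  have bZ: "b \<in> Z" unfolding Z_def using False zb by auto
  have Zbdd: "bdd_below Z" unfolding Z_def by (auto intro: bdd_belowI[of _ x0])
  define s where "s = Inf Z"
  have sx0: "x0 \<le> s" unfolding s_def using bZ by (intro cInf_greatest) (auto simp: Z_def)
  have sb: "s \<le> b" unfolding s_def using bZ Zbdd by (intro cInf_lower)
  have sS: "s \<in> S" using up[OF x0 sx0] .
  have above: "\<phi> y = 0" if yS: "y \<in> S" and ys: "y > s" for y
  proof -
    have "Z \<noteq> {}" using bZ by auto
    then obtain t where "t \<in> Z" "t < y" using ys unfolding s_def by (metis cInf_less_iff Zbdd)
    then show ?thesis using yS unfolding Z_def by auto
  qed
  obtain r a where r: "r > 0" and a: "\<And>y. y \<in> S \<Longrightarrow> \<bar>y - s\<bar> < r \<Longrightarrow> (\<lambda>n. a n * (y - s) ^ n) sums \<phi> y"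
    using ra sS unfolding real_analytic_on_def by blast
  have a0: "a n = 0" for n
  proof (rule series_zero[OF r])
    fix t :: real assume t: "0 < t" "t < r"
    have "s + t \<in> S" using up[OF sS, of "s + t"] t by simp
    moreover have "\<bar>(s + t) - s\<bar> < r" using t by simp
    ultimately have "(\<lambda>n. a n * (s + t - s) ^ n) sums \<phi> (s + t)" by (rule a)
    moreover have "\<phi> (s + t) = 0" using above[of "s + t"] \<open>s + t \<in> S\<close> t by simp
    ultimately show "(\<lambda>n. a n * t ^ n) sums 0" by simp
  qed
  have near: "\<phi> y = 0" if "y \<in> S" "\<bar>y - s\<bar> < r" for y
  proof -
    have "(\<lambda>n. a n * (y - s) ^ n) sums \<phi> y" using a that by blast
    then show ?thesis using a0 by (simp add: sums_iff)
  qed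
  show ?thesis
  proof (cases "s = x0")
    case True then show ?thesis using near[of x0] x0 r by simp
  next
    case False
    then have sx: "x0 < s" using sx0 by simp
    define y where "y = max x0 (s - r/2)"
    have yS: "y \<in> S" using up[OF x0, of y] unfolding y_def by simp
    have ys: "y < s" unfolding y_def using sx r by simp
    have "y \<in> Z" unfolding Z_def
    proof (intro CollectI conjI allI impI)
      show "y \<in> {x0..b}" unfolding y_def using sb sx r by auto
      fix y' assume y': "y' \<in> S" "y \<le> y'"
      show "\<phi> y' = 0"
      proof (cases "y' > s")
        case True then show ?thesis using above y' by simp
      next
        case False then have "\<bar>y' - s\<bar> < r" using y' r unfolding y_def by auto
        then show ?thesis using near y' by simp
      qed
    qed
    then have "s \<le> y" unfolding s_def using Zbdd by (intro cInf_lower)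
    then show ?thesis using ys by simp
  qed
qed

lemma ra_shift:
  assumes ra: "real_analytic_on g UNIV"
  shows "real_analytic_on (\<lambda>x. g (x + c) - \<gamma> * g x) UNIV"
  unfolding real_analytic_on_def
proof (intro ballI)
  fix x :: real
  obtain r1 a1 where r1: "r1 > 0" and a1: "\<And>y. \<bar>y - (x + c)\<bar> < r1 \<Longrightarrow> (\<lambda>n. a1 n * (y - (x + c)) ^ n) sums g y"
    using ra unfolding real_analytic_on_def by blast
  obtain r2 a2 where r2: "r2 > 0" and a2: "\<And>y. \<bar>y - x\<bar> < r2 \<Longrightarrow> (\<lambda>n. a2 n * (y - x) ^ n) sums g y"
    using ra unfolding real_analytic_on_def by blast
  show "\<exists>r>0. \<exists>a. \<forall>y\<in>UNIV. \<bar>y - x\<bar> < r \<longrightarrow> (\<lambda>n. a n * (y - x) ^ n) sums (g (y + c) - \<gamma> * g y)"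
  proof (intro exI[of _ "min r1 r2"] conjI exI[of _ "\<lambda>n. a1 n - \<gamma> * a2 n"] ballI impI)
    show "min r1 r2 > 0" using r1 r2 by simp
    fix y assume "y \<in> (UNIV::real set)" "\<bar>y - x\<bar> < min r1 r2"
    then have h1: "(\<lambda>n. a1 n * (y - x) ^ n) sums g (y + c)" and h2: "(\<lambda>n. a2 n * (y - x) ^ n) sums g y"
      using a1[of "y + c"] a2[of y] by auto
    have "(\<lambda>n. a1 n * (y - x) ^ n - \<gamma> * (a2 n * (y - x) ^ n)) sums (g (y + c) - \<gamma> * g y)"
      by (intro sums_diff h1 sums_mult h2)
    then show "(\<lambda>n. (a1 n - \<gamma> * a2 n) * (y - x) ^ n) sums (g (y + c) - \<gamma> * g y)"
      by (simp add: algebra_simps)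
  qed
qed

lemma ra_minus_const:
  assumes ra: "real_analytic_on f S"
  shows "real_analytic_on (\<lambda>x. f x - c) S"
  unfolding real_analytic_on_def
proof (intro ballI)
  fix x assume x: "x \<in> S"
  obtain r a where r: "r > 0" and a: "\<And>y. y \<in> S \<Longrightarrow> \<bar>y - x\<bar> < r \<Longrightarrow> (\<lambda>n. a n * (y - x) ^ n) sums f y"
    using ra x unfolding real_analytic_on_def by blast
  show "\<exists>r>0. \<exists>b. \<forall>y\<in>S. \<bar>y - x\<bar> < r \<longrightarrow> (\<lambda>n. b n * (y - x) ^ n) sums (f y - c)"
  proof (intro exI[of _ r] conjI exI[of _ "\<lambda>n. if n = 0 then a 0 - c else a n"] ballI impI)
    show "r > 0" by (rule r)
    fix y assume y: "y \<in> S" "\<bar>y - x\<bar> < r"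
    have "(\<lambda>n. a n * (y - x) ^ n - (if n = 0 then c else 0)) sums (f y - c)"
      by (intro sums_diff a y) (use sums_single[of 0 "\<lambda>_. c"] in simp)
    then show "(\<lambda>n. (if n = 0 then a 0 - c else a n) * (y - x) ^ n) sums (f y - c)"
      by (rule sums_cong[THEN iffD1, rotated]) (auto simp: algebra_simps)
  qed
qed


lemma A_op_lower:
  assumes th: "\<theta> \<ge> 1" and fc: "continuous_on {0..\<theta>} f"
    and fnn: "\<And>x. x \<in> {0..\<theta>} \<Longrightarrow> f x \<ge> 0" and m0: "\<And>x. x \<in> {0..1} \<Longrightarrow> f x \<ge> m0"
  shows "A_op f \<theta> \<ge> m0 / sqrt \<theta>"
proof -
  define \<delta> where "\<delta> = 1 / sqrt \<theta>"
  have \<delta>0: "\<delta> > 0" and \<delta>1: "\<delta> \<le> 1" using th unfolding \<delta>_def by auto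
  have \<delta>pi: "\<delta> \<le> pi/2" using \<delta>1 pi_gt3 by linarith
  have c: "continuous_on {0..pi/2} (\<lambda>s. f (\<theta> * (sin s)\<^sup>2))"
    by (rule continuous_on_compose2[OF fc]) (use th in \<open>auto intro!: continuous_intros sin2_range\<close>)
  have i1: "(\<lambda>s. f (\<theta> * (sin s)\<^sup>2)) integrable_on {0..pi/2}" by (rule integrable_continuous_interval[OF c])
  have i2: "(\<lambda>s. f (\<theta> * (sin s)\<^sup>2)) integrable_on {0..\<delta>}"
    by (rule integrable_continuous_interval) (rule continuous_on_subset[OF c], use \<delta>pi in auto)
  have "integral {0..\<delta>} (\<lambda>s. m0) \<le> integral {0..\<delta>} (\<lambda>s. f (\<theta> * (sin s)\<^sup>2))"
  proof (rule integral_le)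
    show "(\<lambda>s. m0) integrable_on {0..\<delta>}" by (intro integrable_continuous_interval continuous_intros)
    show "(\<lambda>s. f (\<theta> * (sin s)\<^sup>2)) integrable_on {0..\<delta>}" by (rule i2)
    fix s assume s: "s \<in> {0..\<delta>}"
    have s0: "0 \<le> sin s" using s \<delta>1 pi_gt3 by (intro sin_ge_zero) auto
    have "sin s \<le> \<delta>" using sin_x_le_x[of s] s by auto
    then have "(sin s)\<^sup>2 \<le> \<delta>\<^sup>2" using s0 by (intro power_mono) auto
    also have "\<delta>\<^sup>2 = 1 / \<theta>" unfolding \<delta>_def using th by (simp add: power_divide)
    finally have "\<theta> * (sin s)\<^sup>2 \<le> 1" using th by (simp add: field_simps)
    moreover have "\<theta> * (sin s)\<^sup>2 \<ge> 0" using th by simp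
    ultimately show "m0 \<le> f (\<theta> * (sin s)\<^sup>2)" using m0 by auto
  qed
  also have "\<dots> \<le> integral {0..pi/2} (\<lambda>s. f (\<theta> * (sin s)\<^sup>2))"
  proof (rule integral_subset_le[OF _ i2 i1])
    show "{0..\<delta>} \<subseteq> {0..pi/2}" using \<delta>pi by auto
    show "\<forall>x\<in>{0..pi/2}. 0 \<le> f (\<theta> * (sin x)\<^sup>2)"
    proof
      fix x assume "x \<in> {0..pi/2}"
      have "\<theta> \<in> {0..\<theta>}" using th by simp
      then show "0 \<le> f (\<theta> * (sin x)\<^sup>2)" by (intro fnn sin2_range)
    qed
  qed
  finally have "integral {0..\<delta>} (\<lambda>s. m0) \<le> A_op f \<theta>" unfolding A_op_def .
  moreover have "integral {0..\<delta>} (\<lambda>s. m0) = m0 / sqrt \<theta>" using \<delta>0 unfolding \<delta>_def by simp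
  ultimately show ?thesis by simp
qed

lemma sqrt_le_1plus: "x \<ge> 0 \<Longrightarrow> sqrt x \<le> 1 + x"
proof -
  assume x: "x \<ge> 0"
  have "x \<le> (1 + x)\<^sup>2" using x by (simp add: power2_eq_square algebra_simps)
  then have "sqrt x \<le> sqrt ((1 + x)\<^sup>2)" by (rule real_sqrt_le_mono)
  then show ?thesis using x by simp
qed

lemma geom_sqrt_lim:
  fixes q a b :: real
  assumes q: "0 < q" "q < 1" and a: "a \<ge> 0" and b: "b \<ge> 0"
  shows "(\<lambda>n. q^n * sqrt (a + real n * b)) \<longlonglongrightarrow> 0"
proof (rule tendsto_sandwich[of "\<lambda>_. 0" _ _ "\<lambda>n. (1 + a) * q^n + b * (real n * q^n)"])
  show "eventually (\<lambda>n. 0 \<le> q^n * sqrt (a + real n * b)) sequentially"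
    using q a b by simp
  show "eventually (\<lambda>n. q^n * sqrt (a + real n * b) \<le> (1 + a) * q^n + b * (real n * q^n)) sequentially"
  proof (rule always_eventually, rule allI)
    fix n
    have "sqrt (a + real n * b) \<le> 1 + (a + real n * b)" using a b by (intro sqrt_le_1plus) simp
    then have "q^n * sqrt (a + real n * b) \<le> q^n * (1 + (a + real n * b))" using q by (intro mult_left_mono) auto
    then show "q^n * sqrt (a + real n * b) \<le> (1 + a) * q^n + b * (real n * q^n)" by (simp add: algebra_simps)
  qed
  show "(\<lambda>_. 0::real) \<longlonglongrightarrow> 0" by simp
  have l1: "(\<lambda>n. q^n) \<longlonglongrightarrow> 0" using q by (intro LIMSEQ_power_zero) auto
  have l2: "(\<lambda>n. real n * q^n) \<longlonglongrightarrow> 0" using q powser_times_n_limit_0[of q] by simp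
  have "(\<lambda>n. (1 + a) * q^n + b * (real n * q^n)) \<longlonglongrightarrow> (1 + a) * 0 + b * 0"
    by (intro tendsto_add tendsto_mult tendsto_const l1 l2)
  then show "(\<lambda>n. (1 + a) * q^n + b * (real n * q^n)) \<longlonglongrightarrow> 0" by simp
qed

lemma f_const_from_A:
  assumes fc: "continuous_on {0..} f" and Ac: "\<And>x. x \<ge> 0 \<Longrightarrow> A_op f x = c"
  shows "x > 0 \<Longrightarrow> f x = 2 * c / pi"
proof -
  assume x: "x > 0"
  define k where "k = 2 * c / pi"
  define F where "F y = integral {0..y} (\<lambda>z. f (z\<^sup>2))" for y
  have Fk: "F y = k * y" if y: "y \<ge> 0" for y
  proof -
    have fcy: "continuous_on {0..y\<^sup>2} f" by (rule continuous_on_subset[OF fc]) auto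
    have "pi/2 * F y = integral {0..sqrt (y\<^sup>2)} (\<lambda>w. A_op f (y\<^sup>2 - w\<^sup>2))"
      using psi_identity[OF _ fcy] y unfolding F_def by simp
    also have "\<dots> = integral {0..y} (\<lambda>w. c)"
    proof -
      have "integral {0..y} (\<lambda>w. A_op f (y\<^sup>2 - w\<^sup>2)) = integral {0..y} (\<lambda>w. c)"
      proof (rule integral_cong)
        fix w assume "w \<in> {0..y}"
        then have "w\<^sup>2 \<le> y\<^sup>2" by (auto intro!: power_mono)
        then show "A_op f (y\<^sup>2 - w\<^sup>2) = c" using Ac by simp
      qed
      then show ?thesis using y by simp
    qed
    also have "\<dots> = c * y" using y by simp
    finally show ?thesis unfolding k_def by (simp add: field_simps)
  qed
  define y where "y = sqrt x"
  have y0: "y > 0" unfolding y_def using x by simp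
  have fc2: "continuous_on {0..y+1} (\<lambda>z. f (z\<^sup>2))"
    by (rule continuous_on_compose2[OF fc]) (auto intro!: continuous_intros)
  have "(F has_real_derivative f (y\<^sup>2)) (at y within {0..y+1})"
    unfolding F_def has_real_derivative_iff_has_vector_derivative
    by (rule integral_has_vector_derivative[OF fc2]) (use y0 in auto)
  then have d1: "(F has_real_derivative f (y\<^sup>2)) (at y)"
    using at_within_Icc_at[of 0 y "y+1"] y0 by simp
  have "((\<lambda>y. k * y) has_real_derivative k) (at y)" by (auto intro!: derivative_eq_intros)
  then have d2: "(F has_real_derivative k) (at y)"
    by (rule has_field_derivative_transform_within_open[where S = "{0<..}"]) (use y0 Fk in auto)
  have "f (y\<^sup>2) = k" using DERIV_unique[OF d1 d2] .
  then show "f x = 2 * c / pi" unfolding y_def k_def using x by simp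
qed


theorem proposition5:
  fixes \<epsilon> x\<^sub>0 :: real and f\<^sub>1 f\<^sub>2 :: "real \<Rightarrow> real"
  assumes "\<epsilon> > 0"
    and "real_analytic_on f\<^sub>1 {-\<epsilon>..}" and "real_analytic_on f\<^sub>2 {-\<epsilon>..}"
    and "\<forall>x\<ge>-\<epsilon>. f\<^sub>1 x > 0" and "\<forall>x\<ge>-\<epsilon>. f\<^sub>2 x > 0"
    and "geom_qp (A_op f\<^sub>1)"
    and "x\<^sub>0 > 0"
    and "\<exists>g\<^sub>1 g\<^sub>2. real_analytic_on g\<^sub>1 UNIV \<and> real_analytic_on g\<^sub>2 UNIV
          \<and> (\<forall>x\<ge>-\<epsilon>. g\<^sub>1 x = A_op f\<^sub>1 x) \<and> (\<forall>x\<ge>-\<epsilon>. g\<^sub>2 x = A_op f\<^sub>2 x)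
          \<and> (\<forall>x. g\<^sub>2 x = g\<^sub>1 (x\<^sub>0 - x))"
  shows "(\<exists>c. \<forall>x\<ge>-\<epsilon>. f\<^sub>1 x = c) \<and> (\<exists>c. \<forall>x\<ge>-\<epsilon>. f\<^sub>2 x = c)
       \<and> (\<exists>c. \<forall>x\<ge>-\<epsilon>. A_op f\<^sub>1 x = c) \<and> (\<exists>c. \<forall>x\<ge>-\<epsilon>. A_op f\<^sub>2 x = c)"
proof -
  note eps = assms(1)
  from assms(8) obtain g1 g2 where ra1: "real_analytic_on g1 UNIV"
    and g1A: "\<And>x. x \<ge> -\<epsilon> \<Longrightarrow> g1 x = A_op f\<^sub>1 x" and g2A: "\<And>x. x \<ge> -\<epsilon> \<Longrightarrow> g2 x = A_op f\<^sub>2 x"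
    and g21: "\<And>x. g2 x = g1 (x\<^sub>0 - x)" by blast
  have upE: "\<And>x y. x \<in> {-\<epsilon>..} \<Longrightarrow> x \<le> y \<Longrightarrow> y \<in> {-\<epsilon>..}" by auto
  have f1c: "continuous_on {-\<epsilon>..} f\<^sub>1" by (rule ra_cont[OF assms(2) upE])
  have f2c: "continuous_on {-\<epsilon>..} f\<^sub>2" by (rule ra_cont[OF assms(3) upE])
  have g1c: "continuous_on UNIV g1" by (rule ra_cont[OF ra1]) auto
  have f1c0: "continuous_on {0..} f\<^sub>1" using f1c by (rule continuous_on_subset) (use eps in auto)
  have f2c0: "continuous_on {0..} f\<^sub>2" using f2c by (rule continuous_on_subset) (use eps in auto)
  have pos1: "\<And>x. x \<ge> 0 \<Longrightarrow> f\<^sub>1 x > 0" using assms(4) eps by auto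
  have pos2: "\<And>x. x \<ge> 0 \<Longrightarrow> f\<^sub>2 x > 0" using assms(5) eps by auto
  have lowerf: "\<exists>m>0. \<forall>\<theta>\<ge>1. A_op f \<theta> \<ge> m / sqrt \<theta>"
    if fc: "continuous_on {0..} f" and fp: "\<And>x. x \<ge> 0 \<Longrightarrow> f x > 0" for f
  proof -
    have "continuous_on {0..1} f" using fc by (rule continuous_on_subset) auto
    then obtain z where z: "z \<in> {0..1}" "\<And>y. y \<in> {0..1} \<Longrightarrow> f z \<le> f y"
      using continuous_attains_inf[of "{0..1::real}" f] by auto
    have "f z > 0" using fp z(1) by simp
    moreover have "A_op f \<theta> \<ge> f z / sqrt \<theta>" if "\<theta> \<ge> 1" for \<theta>
    proof (rule A_op_lower[OF that])
      show "continuous_on {0..\<theta>} f" using fc by (rule continuous_on_subset) auto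
      show "\<And>x. x \<in> {0..\<theta>} \<Longrightarrow> 0 \<le> f x" using fp by (auto simp: less_imp_le)
      show "\<And>x. x \<in> {0..1} \<Longrightarrow> f z \<le> f x" using z by auto
    qed
    ultimately show ?thesis by blast
  qed
  obtain m1 where m1: "m1 > 0" "\<And>\<theta>. \<theta> \<ge> 1 \<Longrightarrow> A_op f\<^sub>1 \<theta> \<ge> m1 / sqrt \<theta>"
    using lowerf[OF f1c0 pos1] by blast
  obtain m2 where m2: "m2 > 0" "\<And>\<theta>. \<theta> \<ge> 1 \<Longrightarrow> A_op f\<^sub>2 \<theta> \<ge> m2 / sqrt \<theta>"
    using lowerf[OF f2c0 pos2] by blast
  obtain \<tau> \<gamma> where \<tau>: "\<tau> > 0" and qp: "\<And>x. x > 0 \<Longrightarrow> A_op f\<^sub>1 (x + \<tau>) = \<gamma> * A_op f\<^sub>1 x"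
    using assms(6) unfolding geom_qp_def geom_qp_with_def by blast
  have A1pos: "A_op f\<^sub>1 1 > 0" using m1(2)[of 1] m1(1) by simp
  have "A_op f\<^sub>1 (1 + \<tau>) > 0" using m1(2)[of "1 + \<tau>"] m1(1) \<tau> by (smt (verit) divide_pos_pos real_sqrt_gt_zero)
  then have \<gamma>pos: "\<gamma> > 0" using qp[of 1] A1pos by (simp add: zero_less_mult_iff)
  have iter: "A_op f\<^sub>1 (1 + real n * \<tau>) = \<gamma>^n * A_op f\<^sub>1 1" for n
  proof (induction n)
    case 0 then show ?case by simp
  next
    case (Suc n)
    have "A_op f\<^sub>1 (1 + real (Suc n) * \<tau>) = A_op f\<^sub>1 ((1 + real n * \<tau>) + \<tau>)" by (simp add: algebra_simps)
    also have "\<dots> = \<gamma> * A_op f\<^sub>1 (1 + real n * \<tau>)" using \<tau> by (intro qp) (simp add: add_pos_nonneg)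
    finally show ?case using Suc by simp
  qed
  have ext: "g1 (x + \<tau>) = \<gamma> * g1 x" for x
  proof -
    have "g1 (x + \<tau>) - \<gamma> * g1 x = 0"
    proof (rule ra_identity[OF ra_shift[OF ra1], where b = 1])
      show "\<And>x y. x \<in> (UNIV::real set) \<Longrightarrow> x \<le> y \<Longrightarrow> y \<in> UNIV" by simp
      fix y :: real assume "y \<in> UNIV" "1 \<le> y"
      then show "g1 (y + \<tau>) - \<gamma> * g1 y = 0" using g1A[of y] g1A[of "y + \<tau>"] qp[of y] eps \<tau> by simp
    qed simp
    then show ?thesis by simp
  qed
  have iterneg: "g1 0 = \<gamma>^n * g1 (- (real n * \<tau>))" for n
  proof (induction n)
    case 0 then show ?case by simp
  next
    case (Suc n)
    have "g1 (- (real n * \<tau>)) = g1 (- (real (Suc n) * \<tau>) + \<tau>)" by (simp add: algebra_simps)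
    also have "\<dots> = \<gamma> * g1 (- (real (Suc n) * \<tau>))" by (rule ext)
    finally show ?case using Suc by simp
  qed
  have A10: "A_op f\<^sub>1 0 > 0"
    unfolding A_op_def using pos1[of 0] by simp
  have g10: "g1 0 > 0" using g1A[of 0] eps A10 by simp
  have "\<not> \<gamma> < 1"
  proof
    assume g1': "\<gamma> < 1"
    have lim: "(\<lambda>n. A_op f\<^sub>1 1 * (\<gamma>^n * sqrt (1 + real n * \<tau>))) \<longlonglongrightarrow> A_op f\<^sub>1 1 * 0"
      by (intro tendsto_mult tendsto_const geom_sqrt_lim \<gamma>pos g1') (use \<tau> in auto)
    have "m1 \<le> A_op f\<^sub>1 1 * 0"
    proof (rule LIMSEQ_le_const[OF lim], intro exI allI impI)
      fix n :: nat
      have t1: "1 + real n * \<tau> \<ge> 1" using \<tau> by simp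
      have "m1 / sqrt (1 + real n * \<tau>) \<le> \<gamma>^n * A_op f\<^sub>1 1" using m2 m1(2)[OF t1] iter[of n] by simp
      then show "m1 \<le> A_op f\<^sub>1 1 * (\<gamma>^n * sqrt (1 + real n * \<tau>))"
        using t1 by (simp add: divide_le_eq mult_ac)
    qed
    then show False using m1 by simp
  qed
  moreover have "\<not> \<gamma> > 1"
  proof
    assume g1': "\<gamma> > 1"
    define q where "q = 1 / \<gamma>"
    have q: "0 < q" "q < 1" using g1' unfolding q_def by auto
    have lim: "(\<lambda>n. g1 0 * (q^n * sqrt (x\<^sub>0 + real n * \<tau>))) \<longlonglongrightarrow> g1 0 * 0"
      by (intro tendsto_mult tendsto_const geom_sqrt_lim q) (use \<tau> assms(7) in auto)
    obtain N :: nat where N: "real N \<ge> 1 / \<tau>" using real_arch_simple by blast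
    have "m2 \<le> g1 0 * 0"
    proof (rule LIMSEQ_le_const[OF lim], intro exI[of _ N] allI impI)
      fix n :: nat assume n: "N \<le> n"
      have "real n * \<tau> \<ge> 1" using N n \<tau> by (smt (verit) divide_le_eq of_nat_mono mult_right_mono)
      then have t1: "x\<^sub>0 + real n * \<tau> \<ge> 1" using assms(7) by simp
      have "A_op f\<^sub>2 (x\<^sub>0 + real n * \<tau>) = g1 (- (real n * \<tau>))"
        using g2A[of "x\<^sub>0 + real n * \<tau>"] g21[of "x\<^sub>0 + real n * \<tau>"] t1 eps by simp
      also have "\<dots> = q^n * g1 0"
        using iterneg[of n] \<gamma>pos unfolding q_def by (simp add: power_one_over field_simps)
      finally have "m2 / sqrt (x\<^sub>0 + real n * \<tau>) \<le> q^n * g1 0" using m2(2)[OF t1] by simp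
      then show "m2 \<le> g1 0 * (q^n * sqrt (x\<^sub>0 + real n * \<tau>))"
        using t1 by (simp add: divide_le_eq mult_ac)
    qed
    then show False using m2 by simp
  qed
  ultimately have \<gamma>1: "\<gamma> = 1" by simp
  have per: "g1 (x + \<tau>) = g1 x" for x using ext[of x] \<gamma>1 by simp
  have Psi: "integral {0..sqrt X} (\<lambda>w. g1 (X - w\<^sup>2)) = pi/2 * integral {0..sqrt X} (\<lambda>z. f\<^sub>1 (z\<^sup>2))"
    if X: "X \<ge> 0" for X
  proof -
    have "integral {0..sqrt X} (\<lambda>w. g1 (X - w\<^sup>2)) = integral {0..sqrt X} (\<lambda>w. A_op f\<^sub>1 (X - w\<^sup>2))"
    proof (rule integral_cong)
      fix w assume "w \<in> {0..sqrt X}"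
      then have "w\<^sup>2 \<le> (sqrt X)\<^sup>2" by (auto intro!: power_mono)
      then show "g1 (X - w\<^sup>2) = A_op f\<^sub>1 (X - w\<^sup>2)" using X eps by (intro g1A) simp
    qed
    also have "\<dots> = pi/2 * integral {0..sqrt X} (\<lambda>z. f\<^sub>1 (z\<^sup>2))"
      by (rule psi_identity[OF X]) (rule continuous_on_subset[OF f1c0], auto)
    finally show ?thesis .
  qed
  have mono: "integral {0..sqrt X} (\<lambda>w. g1 (X - w\<^sup>2)) \<le> integral {0..sqrt Y} (\<lambda>w. g1 (Y - w\<^sup>2))"
    if XY: "0 \<le> X" "X \<le> Y" for X Y
  proof -
    have fc2: "continuous_on {0..sqrt Y} (\<lambda>z. f\<^sub>1 (z\<^sup>2))"
      by (rule continuous_on_compose2[OF f1c0]) (auto intro!: continuous_intros)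
    have "integral {0..sqrt X} (\<lambda>z. f\<^sub>1 (z\<^sup>2)) \<le> integral {0..sqrt Y} (\<lambda>z. f\<^sub>1 (z\<^sup>2))"
    proof (rule integral_subset_le)
      show "{0..sqrt X} \<subseteq> {0..sqrt Y}" using XY by auto
      show "(\<lambda>z. f\<^sub>1 (z\<^sup>2)) integrable_on {0..sqrt X}"
        by (rule integrable_continuous_interval, rule continuous_on_subset[OF fc2]) (use XY in auto)
      show "(\<lambda>z. f\<^sub>1 (z\<^sup>2)) integrable_on {0..sqrt Y}" by (rule integrable_continuous_interval[OF fc2])
      show "\<forall>x\<in>{0..sqrt Y}. 0 \<le> f\<^sub>1 (x\<^sup>2)" using pos1 by (auto simp: less_imp_le)
    qed
    then have le: "pi/2 * integral {0..sqrt X} (\<lambda>z. f\<^sub>1 (z\<^sup>2)) \<le> pi/2 * integral {0..sqrt Y} (\<lambda>z. f\<^sub>1 (z\<^sup>2))"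
      by (rule mult_left_mono) simp
    have Y0: "Y \<ge> 0" using XY by simp
    show ?thesis unfolding Psi[OF XY(1)] Psi[OF Y0] by (rule le)
  qed
  have gconst: "g1 x = g1 0" for x by (rule periodic_mono_const[OF \<tau> g1c per mono])
  define c where "c = g1 0"
  have A1c: "A_op f\<^sub>1 x = c" if "x \<ge> -\<epsilon>" for x using g1A[OF that] gconst[of x] unfolding c_def by simp
  have A2c: "A_op f\<^sub>2 x = c" if "x \<ge> -\<epsilon>" for x using g2A[OF that] g21[of x] gconst[of "x\<^sub>0 - x"] unfolding c_def by simp
  have fconst: "\<forall>x\<ge>-\<epsilon>. f x = 2 * c / pi"
    if ra: "real_analytic_on f {-\<epsilon>..}" and fc0: "continuous_on {0..} f" and Ac: "\<And>x. x \<ge> -\<epsilon> \<Longrightarrow> A_op f x = c" for f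
  proof (intro allI impI)
    fix x assume x: "x \<ge> -\<epsilon>"
    have pos: "f y = 2 * c / pi" if "y > 0" for y
      by (rule f_const_from_A[OF fc0 _ that]) (use Ac eps in auto)
    have "f x - 2 * c / pi = 0"
    proof (rule ra_identity[OF ra_minus_const[OF ra] upE, where b = 1])
      fix y assume "y \<in> {-\<epsilon>..}" "1 \<le> y"
      then show "f y - 2 * c / pi = 0" using pos[of y] by simp
    qed (use x in auto)
    then show "f x = 2 * c / pi" by simp
  qed
  show ?thesis
    using fconst[OF assms(2) f1c0 A1c] fconst[OF assms(3) f2c0 A2c] A1c A2c by blast
qed


end
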